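(* Let $k\ge 3$ be an integer and let $\Gamma$ be any graph in the family $M_{0,1,2,\ldots,k-1}$ (defined in the context). Then $\Gamma$ has a Fulkerson-cover.
   Context: All graphs are finite. A Fulkerson-cover of a cubic graph is a collection of six perfect matchings such that every edge belongs to exactly two of them. A cubic graph is cyclically 4-edge-connected if at least 4 edges must be removed to disconnect it into two components each containing a circuit. The family $M_{0,1,\ldots,k-1}$ ($k\ge 2$): Let $G_0,G_1,\ldots,G_{k-1}$ be bridgeless, cyclically 4-edge-connected cubic graphs, each having a Fulkerson-cover. In each $G_i$ choose an edge $x_iy_i$, let $x_i^0,x_i^1$ be the two neighbours of $x_i$ other than $y_i$, let $y_i^0,y_i^1$ be the two neighbours of $y_i$ other than $x_i$, and let $H_i=G_i\setminus\{x_i,y_i\}$ (delete the two vertices and their incident edges). The graph $\{G;G_0,\ldots,G_{k-1}\}$ is obtained from the disjoint union of $H_0,\ldots,H_{k-1}$ by adding new vertices $a_j,b_j,c_j$ for $0\le j\le k-1$ and $v_0,\ldots,v_{k-3}$ (none if $k=2$), and the following edges, with indices of $x$ taken modulo $k$: - for each $0\le j\le k-1$: $a_jy_j^0$, $a_jx_{j+1}^0$, $b_jy_j^1$, $b_jx_{j+1}^1$, $a_jc_j$, $b_jc_j$; - the edges of the path $c_1v_0v_1\cdots v_{k-3}c_0$ (for $k=2$ this is the single edge $c_0c_1$); - for each $2\le i\le k-1$: the edge $c_iv_{i-2}$. (Equivalently, it is built recursively: for $k=2$ take the graph above with edge $c_0c_1$; for $i=3,\ldots,k$, add $H_{i-1}$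 and $a_{i-1},b_{i-1},c_{i-1}$, subdivide the edge at $c_0$ not of the form $a_0c_0,b_0c_0$ by a new vertex $v_{i-3}$, join $c_{i-1}$ to $a_{i-1},b_{i-1},v_{i-3}$, make $a_{i-1}$ adjacent to $x_0^0,y_{i-1}^0$, $b_{i-1}$ adjacent to $x_0^1,y_{i-1}^1$, and replace the edges $a_{i-2}x_0^0$, $b_{i-2}x_0^1$ by $a_{i-2}x_{i-1}^0$, $b_{i-2}x_{i-1}^1$.) $M_{0,1,\ldots,k-1}$ denotes the set of all graphs obtained this way, over all such choices of $G_i$, edges $x_iy_i$ and labelings of neighbours. *)

theory Defs
  imports Main
begin

definition graph :: "'a set \<Rightarrow> 'a set set \<Rightarrow> bool" where
  "graph V E \<longleftrightarrow> finite V \<and> (\<forall>e\<in>E. \<exists>u v. u \<noteq> v \<and> e = {u, v} \<and> u \<in> V \<and> v \<in> V)"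

definition degree :: "'a set set \<Rightarrow> 'a \<Rightarrow> nat" where
  "degree E v = card {e\<in>E. v \<in> e}"

definition cubic :: "'a set \<Rightarrow> 'a set set \<Rightarrow> bool" where
  "cubic V E \<longleftrightarrow> graph V E \<and> (\<forall>v\<in>V. degree E v = 3)"

definition adj :: "'a set set \<Rightarrow> 'a \<Rightarrow> 'a \<Rightarrow> bool" where
  "adj E u v \<longleftrightarrow> {u, v} \<in> E \<and> u \<noteq> v"

definition reach :: "'a set set \<Rightarrow> 'a \<Rightarrow> 'a \<Rightarrow> bool" where
  "reach E = (adj E)\<^sup>*\<^sup>*"

definition bridgeless :: "'a set \<Rightarrow> 'a set set \<Rightarrow> bool" where
  "bridgeless V E \<longleftrightarrow> (\<forall>u v. {u, v} \<in> E \<longrightarrow> reach (E - {{u, v}}) u v)"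

definition has_circuit :: "'a set \<Rightarrow> 'a set set \<Rightarrow> bool" where
  "has_circuit V E \<longleftrightarrow> (\<exists>vs. length vs \<ge> 3 \<and> distinct vs \<and> set vs \<subseteq> V \<and>
      (\<forall>i<length vs. {vs ! i, vs ! ((i + 1) mod length vs)} \<in> E))"

definition induced_edges :: "'a set set \<Rightarrow> 'a set \<Rightarrow> 'a set set" where
  "induced_edges E S = {e\<in>E. e \<subseteq> S}"

definition cut_edges :: "'a set set \<Rightarrow> 'a set \<Rightarrow> 'a set set" where
  "cut_edges E S = {e\<in>E. e \<inter> S \<noteq> {} \<and> \<not> e \<subseteq> S}"

definition cyc4_connected :: "'a set \<Rightarrow> 'a set set \<Rightarrow> bool" where
  "cyc4_connected V E \<longleftrightarrow>
     (\<forall>S\<subseteq>V. has_circuit S (induced_edges E S) \<and> has_circuit (V - S) (induced_edges E (V - S))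
        \<longrightarrow> card (cut_edges E S) \<ge> 4)"

definition perfect_matching :: "'a set \<Rightarrow> 'a set set \<Rightarrow> 'a set set \<Rightarrow> bool" where
  "perfect_matching V E M \<longleftrightarrow> M \<subseteq> E \<and> (\<forall>v\<in>V. \<exists>!e. e \<in> M \<and> v \<in> e)"

definition fulkerson_cover :: "'a set \<Rightarrow> 'a set set \<Rightarrow> 'a set set list \<Rightarrow> bool" where
  "fulkerson_cover V E Ms \<longleftrightarrow> length Ms = 6 \<and> (\<forall>M\<in>set Ms. perfect_matching V E M) \<and>
     (\<forall>e\<in>E. length (filter (\<lambda>M. e \<in> M) Ms) = 2)"

definition has_fulkerson_cover :: "'a set \<Rightarrow> 'a set set \<Rightarrow> bool" where
  "has_fulkerson_cover V E \<longleftrightarrow> (\<exists>Ms. fulkerson_cover V E Ms)"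

text \<open>Vertices: Old i u is the copy of vertex u of H_i; Av j, Bv j, Cv j are a_j, b_j, c_j;
  Pv i is v_i.\<close>
datatype 'a mvert = Old nat 'a | Av nat | Bv nat | Cv nat | Pv nat

definition M_vertices :: "nat \<Rightarrow> (nat \<Rightarrow> 'a set) \<Rightarrow> (nat \<Rightarrow> 'a) \<Rightarrow> (nat \<Rightarrow> 'a) \<Rightarrow> 'a mvert set" where
  "M_vertices k V x y =
     (\<Union>i<k. Old i ` (V i - {x i, y i})) \<union> Av ` {..<k} \<union> Bv ` {..<k} \<union> Cv ` {..<k}
     \<union> Pv ` {..<k - 2}"

definition M_path :: "nat \<Rightarrow> 'a mvert list" where
  "M_path k = [Cv 1] @ map Pv [0..<k - 2] @ [Cv 0]"

definition M_edges ::
  "nat \<Rightarrow> (nat \<Rightarrow> 'a set set) \<Rightarrow> (nat \<Rightarrow> 'a) \<Rightarrow> (nat \<Rightarrow> 'a) \<Rightarrow>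
   (nat \<Rightarrow> 'a) \<Rightarrow> (nat \<Rightarrow> 'a) \<Rightarrow> (nat \<Rightarrow> 'a) \<Rightarrow> (nat \<Rightarrow> 'a) \<Rightarrow> 'a mvert set set" where
  "M_edges k E x y x0 x1 y0 y1 =
     (\<Union>i<k. (\<lambda>e. Old i ` e) ` {e\<in>E i. x i \<notin> e \<and> y i \<notin> e})
     \<union> (\<Union>j<k. {{Av j, Old j (y0 j)}, {Av j, Old ((j + 1) mod k) (x0 ((j + 1) mod k))},
               {Bv j, Old j (y1 j)}, {Bv j, Old ((j + 1) mod k) (x1 ((j + 1) mod k))},
               {Av j, Cv j}, {Bv j, Cv j}})
     \<union> {{M_path k ! i, M_path k ! (i + 1)} | i. i + 1 < length (M_path k :: 'a mvert list)}
     \<union> {{Cv i, Pv (i - 2)} | i. 2 \<le> i \<and> i < k}"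

definition M_ingredient :: "'a set \<Rightarrow> 'a set set \<Rightarrow> 'a \<Rightarrow> 'a \<Rightarrow> 'a \<Rightarrow> 'a \<Rightarrow> 'a \<Rightarrow> 'a \<Rightarrow> bool" where
  "M_ingredient V E x y x0 x1 y0 y1 \<longleftrightarrow>
     cubic V E \<and> bridgeless V E \<and> cyc4_connected V E \<and> has_fulkerson_cover V E \<and>
     {x, y} \<in> E \<and>
     {x, x0} \<in> E \<and> {x, x1} \<in> E \<and> x0 \<noteq> x1 \<and> x0 \<noteq> y \<and> x1 \<noteq> y \<and>
     {y, y0} \<in> E \<and> {y, y1} \<in> E \<and> y0 \<noteq> y1 \<and> y0 \<noteq> x \<and> y1 \<noteq> x"

end

theory Submission
  imports Defs "HOL-Library.Multiset"
begin

lemma length_filter_two: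
  assumes "\<And>t. t \<in> set xs \<Longrightarrow> P t \<Longrightarrow> t = a \<or> t = b" "P a" "P b" "a \<noteq> b"
  shows "length (filter P xs) = count (mset xs) a + count (mset xs) b"
  using assms(1) proof (induction xs)
  case Nil then show ?case by simp
next
  case (Cons t xs)
  then show ?case using assms(2-4) by auto
qed

definition pat :: "nat \<Rightarrow> (nat \<times> nat) multiset" where
  "pat n = {#(2,2),(2,2)#} + (if n = 2 then {#(0,0),(0,0),(1,1),(1,1)#}
     else if n = 1 then {#(0,0),(1,1),(0,1),(1,0)#} else {#(0,1),(0,1),(1,0),(1,0)#})"

lemma pat_lemma:
  fixes ts :: "(nat \<times> nat) list"
  assumes S: "\<forall>t\<in>set ts. t \<in> {(0,0),(0,1),(1,0),(1,1),(2,2)}"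
    and c2: "count (mset ts) (2,2) = 2"
    and x0: "length (filter (\<lambda>t. fst t = 0) ts) = 2"
    and x1: "length (filter (\<lambda>t. fst t = 1) ts) = 2"
    and y0: "length (filter (\<lambda>t. snd t = 0) ts) = 2"
    and y1: "length (filter (\<lambda>t. snd t = 1) ts) = 2"
  shows "count (mset ts) (0,0) \<le> 2 \<and> mset ts = pat (count (mset ts) (0,0))"
proof -
  have a: "count (mset ts) (0,0) + count (mset ts) (0,1) = 2"
    using x0 length_filter_two[of ts "\<lambda>t. fst t = 0" "(0,0)" "(0,1)"] S by force
  have b: "count (mset ts) (1,0) + count (mset ts) (1,1) = 2"
    using x1 length_filter_two[of ts "\<lambda>t. fst t = 1" "(1,0)" "(1,1)"] S by force
  have c: "count (mset ts) (0,0) + count (mset ts) (1,0) = 2"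
    using y0 length_filter_two[of ts "\<lambda>t. snd t = 0" "(0,0)" "(1,0)"] S by force
  have d: "count (mset ts) (0,1) + count (mset ts) (1,1) = 2"
    using y1 length_filter_two[of ts "\<lambda>t. snd t = 1" "(0,1)" "(1,1)"] S by force
  define n where "n = count (mset ts) (0,0)"
  have n2: "n \<le> 2" using a n_def by linarith
  have "mset ts = pat n"
  proof (rule multiset_eqI)
    fix p :: "nat \<times> nat"
    show "count (mset ts) p = count (pat n) p"
    proof (cases "p \<in> {(0,0),(0,1),(1,0),(1,1),(2,2)}")
      case True
      have e1: "count (mset ts) (0,0) = n" "count (mset ts) (0,1) = 2 - n"
        "count (mset ts) (1,0) = 2 - n" "count (mset ts) (1,1) = n"
        using a b c d n_def by linarith+
      have "n = 0 \<or> n = 1 \<or> n = 2" using n2 by auto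
      then show ?thesis using True c2 e1 unfolding pat_def
        by (elim disjE) auto
    next
      case False
      then have "p \<notin> set ts" using S by blast
      then have "count (mset ts) p = 0" by (simp add: count_mset_0_iff)
      moreover have "count (pat n) p = 0" using False unfolding pat_def by auto
      ultimately show ?thesis by simp
    qed
  qed
  then show ?thesis using n2 n_def by simp
qed

lemma mset_map_lift:
  "mset (map f xs) = mset ys \<Longrightarrow> \<exists>zs. mset zs = mset xs \<and> map f zs = ys"
proof (induction ys arbitrary: xs)
  case Nil then show ?case by simp
next
  case (Cons b ys)
  then have "b \<in> set (map f xs)" by (metis list.set_intros(1) set_mset_mset)
  then obtain a where a: "a \<in> set xs" "f a = b" by auto
  have "mset (map f (remove1 a xs)) = image_mset f (mset xs - {#a#})"
    by (simp add: mset_remove1)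
  also have "\<dots> = image_mset f (mset xs) - {#f a#}"
    using a(1) by (simp add: image_mset_Diff)
  also have "\<dots> = mset ys" using Cons.prems a(2) by simp
  finally have "mset (map f (remove1 a xs)) = mset ys" .
  then obtain zs where "mset zs = mset (remove1 a xs)" "map f zs = ys" using Cons.IH by blast
  then show ?case using a by (intro exI[of _ "a # zs"]) (simp add: mset_remove1)
qed

datatype bk = Zb | CPb nat | QPb nat

fun bv :: "nat \<Rightarrow> bk \<Rightarrow> nat \<Rightarrow> nat \<times> nat" where
  "bv n Zb p = (2,2)"
| "bv n (CPb a) p = (if p = 0 then a else 1 - a, if n \<ge> 1 then (if p = 0 then a else 1 - a) else 1 - (if p = 0 then a else 1 - a))"
| "bv n (QPb b) p = (if n = 2 then (if p = 0 then b else 1 - b) else 1 - (if p = 0 then b else 1 - b), if p = 0 then b else 1 - b)"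

definition blk :: "nat \<Rightarrow> bk \<Rightarrow> (nat \<times> nat) multiset" where
  "blk n K = {# bv n K 0, bv n K 1 #}"

lemma blk_pat: assumes "n \<le> 2" "a \<le> 1" "b \<le> 1"
  shows "blk n Zb + blk n (CPb a) + blk n (QPb b) = pat n"
proof -
  have n: "n = 0 \<or> n = 1 \<or> n = 2" and a: "a = 0 \<or> a = 1" and b: "b = 0 \<or> b = 1" using assms by auto
  show ?thesis using n a b unfolding pat_def blk_def
    by (elim disjE) (simp_all add: add_mset_commute)
qed

lemma pm_unique: "perfect_matching V E M \<Longrightarrow> u \<in> V \<Longrightarrow> e \<in> M \<Longrightarrow> e' \<in> M \<Longrightarrow> u \<in> e \<Longrightarrow> u \<in> e' \<Longrightarrow> e = e'"
  unfolding perfect_matching_def by blast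

lemma pm_ex: "perfect_matching V E M \<Longrightarrow> u \<in> V \<Longrightarrow> \<exists>e\<in>M. u \<in> e"
  unfolding perfect_matching_def by blast

locale MG =
  fixes k :: nat and V :: "nat \<Rightarrow> 'a set" and E :: "nat \<Rightarrow> 'a set set"
    and x y x0 x1 y0 y1 :: "nat \<Rightarrow> 'a"
  assumes k3: "k \<ge> 3"
    and ing: "\<And>i. i < k \<Longrightarrow> M_ingredient (V i) (E i) (x i) (y i) (x0 i) (x1 i) (y0 i) (y1 i)"
begin

lemma ingE:
  assumes "i < k"
  shows "graph (V i) (E i)" "\<forall>v\<in>V i. degree (E i) v = 3" "has_fulkerson_cover (V i) (E i)"
    "{x i, y i} \<in> E i" "{x i, x0 i} \<in> E i" "{x i, x1 i} \<in> E i" "x0 i \<noteq> x1 i" "x0 i \<noteq> y i" "x1 i \<noteq> y i"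
    "{y i, y0 i} \<in> E i" "{y i, y1 i} \<in> E i" "y0 i \<noteq> y1 i" "y0 i \<noteq> x i" "y1 i \<noteq> x i"
  using ing[OF assms] unfolding M_ingredient_def cubic_def by auto

lemma edge_form: "i < k \<Longrightarrow> e \<in> E i \<Longrightarrow> \<exists>u v. u \<noteq> v \<and> e = {u, v} \<and> u \<in> V i \<and> v \<in> V i"
  using ingE(1) unfolding graph_def by blast

lemma edge_sub: "i < k \<Longrightarrow> e \<in> E i \<Longrightarrow> e \<subseteq> V i"
  using edge_form by blast

lemma finE: "i < k \<Longrightarrow> finite (E i)"
proof -
  assume i: "i < k"
  have "finite (V i)" using ingE(1)[OF i] unfolding graph_def by blast
  moreover have "E i \<subseteq> Pow (V i)" using edge_sub[OF i] by blast
  ultimately show ?thesis by (meson finite_Pow_iff rev_finite_subset)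
qed

lemma two_ne: "{a, b} \<in> E i \<Longrightarrow> i < k \<Longrightarrow> a \<noteq> b \<and> a \<in> V i \<and> b \<in> V i"
  using edge_form by (metis doubleton_eq_iff)

lemma verts:
  assumes "i < k"
  shows "x i \<in> V i" "y i \<in> V i" "x0 i \<in> V i" "x1 i \<in> V i" "y0 i \<in> V i" "y1 i \<in> V i"
    "x i \<noteq> y i" "x0 i \<noteq> x i" "x1 i \<noteq> x i" "y0 i \<noteq> y i" "y1 i \<noteq> y i"
  using two_ne[OF ingE(4)[OF assms] assms] two_ne[OF ingE(5)[OF assms] assms]
    two_ne[OF ingE(6)[OF assms] assms] two_ne[OF ingE(10)[OF assms] assms]
    two_ne[OF ingE(11)[OF assms] assms] by auto

lemma x_edges:
  assumes i: "i < k"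
  shows "{e\<in>E i. x i \<in> e} = {{x i, y i}, {x i, x0 i}, {x i, x1 i}}"
proof -
  have sub: "{{x i, y i}, {x i, x0 i}, {x i, x1 i}} \<subseteq> {e\<in>E i. x i \<in> e}"
    using ingE[OF i] by auto
  have c3: "card {{x i, y i}, {x i, x0 i}, {x i, x1 i}} = 3"
    using ingE[OF i] verts[OF i] by (auto simp: doubleton_eq_iff card_insert_if)
  have "card {e\<in>E i. x i \<in> e} = 3"
    using ingE(2)[OF i] verts(1)[OF i] unfolding degree_def by blast
  moreover have "finite {e\<in>E i. x i \<in> e}" using finE[OF i] by simp
  ultimately show ?thesis using sub c3 by (metis card_subset_eq)
qed

lemma y_edges:
  assumes i: "i < k"
  shows "{e\<in>E i. y i \<in> e} = {{x i, y i}, {y i, y0 i}, {y i, y1 i}}"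
proof -
  have sub: "{{x i, y i}, {y i, y0 i}, {y i, y1 i}} \<subseteq> {e\<in>E i. y i \<in> e}"
    using ingE[OF i] by auto
  have c3: "card {{x i, y i}, {y i, y0 i}, {y i, y1 i}} = 3"
    using ingE[OF i] verts[OF i] by (auto simp: doubleton_eq_iff card_insert_if)
  have "card {e\<in>E i. y i \<in> e} = 3"
    using ingE(2)[OF i] verts(2)[OF i] unfolding degree_def by blast
  moreover have "finite {e\<in>E i. y i \<in> e}" using finE[OF i] by simp
  ultimately show ?thesis using sub c3 by (metis card_subset_eq)
qed

lemma x_edge_cases: "i < k \<Longrightarrow> e \<in> E i \<Longrightarrow> x i \<in> e \<Longrightarrow> e = {x i, y i} \<or> e = {x i, x0 i} \<or> e = {x i, x1 i}"
  using x_edges by blast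

lemma y_edge_cases: "i < k \<Longrightarrow> e \<in> E i \<Longrightarrow> y i \<in> e \<Longrightarrow> e = {x i, y i} \<or> e = {y i, y0 i} \<or> e = {y i, y1 i}"
  using y_edges by blast

definition xv :: "nat \<Rightarrow> 'a set set \<Rightarrow> nat" where
  "xv i M = (if {x i, x0 i} \<in> M then 0 else if {x i, x1 i} \<in> M then 1 else 2)"
definition yv :: "nat \<Rightarrow> 'a set set \<Rightarrow> nat" where
  "yv i M = (if {y i, y0 i} \<in> M then 0 else if {y i, y1 i} \<in> M then 1 else 2)"

lemma xv_char:
  assumes i: "i < k" and pm: "perfect_matching (V i) (E i) M"
  shows "(xv i M = 0 \<longleftrightarrow> {x i, x0 i} \<in> M) \<and> (xv i M = 1 \<longleftrightarrow> {x i, x1 i} \<in> M)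
     \<and> (xv i M = 2 \<longleftrightarrow> {x i, y i} \<in> M) \<and> xv i M \<le> 2"
proof -
  obtain e where e: "e \<in> M" "x i \<in> e" using pm_ex[OF pm verts(1)[OF i]] by blast
  have "e \<in> E i" using pm e unfolding perfect_matching_def by blast
  then have ec: "e = {x i, y i} \<or> e = {x i, x0 i} \<or> e = {x i, x1 i}" using x_edge_cases[OF i] e by blast
  have u: "\<And>e'. e' \<in> M \<Longrightarrow> x i \<in> e' \<Longrightarrow> e' = e" using pm_unique[OF pm verts(1)[OF i]] e by blast
  have d: "{x i, y i} \<noteq> {x i, x0 i}" "{x i, y i} \<noteq> {x i, x1 i}" "{x i, x0 i} \<noteq> {x i, x1 i}"
    using ingE[OF i] verts[OF i] by (auto simp: doubleton_eq_iff)
  have m: "{x i, x0 i} \<in> M \<longleftrightarrow> e = {x i, x0 i}" "{x i, x1 i} \<in> M \<longleftrightarrow> e = {x i, x1 i}"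
    "{x i, y i} \<in> M \<longleftrightarrow> e = {x i, y i}" using u e by blast+
  show ?thesis unfolding xv_def m using ec d d[symmetric] by (elim disjE) simp_all
qed

lemma yv_char:
  assumes i: "i < k" and pm: "perfect_matching (V i) (E i) M"
  shows "(yv i M = 0 \<longleftrightarrow> {y i, y0 i} \<in> M) \<and> (yv i M = 1 \<longleftrightarrow> {y i, y1 i} \<in> M)
     \<and> (yv i M = 2 \<longleftrightarrow> {x i, y i} \<in> M) \<and> yv i M \<le> 2"
proof -
  obtain e where e: "e \<in> M" "y i \<in> e" using pm_ex[OF pm verts(2)[OF i]] by blast
  have "e \<in> E i" using pm e unfolding perfect_matching_def by blast
  then have ec: "e = {x i, y i} \<or> e = {y i, y0 i} \<or> e = {y i, y1 i}" using y_edge_cases[OF i] e by blast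
  have u: "\<And>e'. e' \<in> M \<Longrightarrow> y i \<in> e' \<Longrightarrow> e' = e" using pm_unique[OF pm verts(2)[OF i]] e by blast
  have d: "{x i, y i} \<noteq> {y i, y0 i}" "{x i, y i} \<noteq> {y i, y1 i}" "{y i, y0 i} \<noteq> {y i, y1 i}"
    using ingE[OF i] verts[OF i] by (auto simp: doubleton_eq_iff)
  have m: "{y i, y0 i} \<in> M \<longleftrightarrow> e = {y i, y0 i}" "{y i, y1 i} \<in> M \<longleftrightarrow> e = {y i, y1 i}"
    "{x i, y i} \<in> M \<longleftrightarrow> e = {x i, y i}" using u e by blast+
  show ?thesis unfolding yv_def m using ec d d[symmetric] by (elim disjE) simp_all
qed

end

lemma count_len: "count (mset ts) a = length (filter (\<lambda>t. t = a) ts)"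
  by (induction ts) auto

lemma len_filter_map: "length (filter P (map f xs)) = length (filter (\<lambda>z. P (f z)) xs)"
  by (induction xs) auto

lemma len_filter_cong: "(\<And>z. z \<in> set xs \<Longrightarrow> P z = Q z) \<Longrightarrow> length (filter P xs) = length (filter Q xs)"
  by (metis filter_cong)

lemma len_filter_mset: "mset xs = mset ys \<Longrightarrow> length (filter P xs) = length (filter P ys)"
  by (metis mset_filter size_mset)

context MG begin

definition Ms :: "nat \<Rightarrow> 'a set set list" where
  "Ms i = (SOME Ms. fulkerson_cover (V i) (E i) Ms)"

lemma Ms_fc: "i < k \<Longrightarrow> fulkerson_cover (V i) (E i) (Ms i)"
  unfolding Ms_def using ingE(3) unfolding has_fulkerson_cover_def by (metis someI_ex)

lemma Ms_props:
  assumes "i < k"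
  shows "length (Ms i) = 6" "\<And>M. M \<in> set (Ms i) \<Longrightarrow> perfect_matching (V i) (E i) M"
    "\<And>e. e \<in> E i \<Longrightarrow> length (filter (\<lambda>M. e \<in> M) (Ms i)) = 2"
  using Ms_fc[OF assms] unfolding fulkerson_cover_def by auto

definition tyM :: "nat \<Rightarrow> 'a set set \<Rightarrow> nat \<times> nat" where
  "tyM i M = (xv i M, yv i M)"

definition nn :: "nat \<Rightarrow> nat" where
  "nn i = count (mset (map (tyM i) (Ms i))) (0,0)"

lemma tys_pat:
  assumes i: "i < k"
  shows "nn i \<le> 2 \<and> mset (map (tyM i) (Ms i)) = pat (nn i)"
  unfolding nn_def
proof (rule pat_lemma)
  have pm: "\<And>M. M \<in> set (Ms i) \<Longrightarrow> perfect_matching (V i) (E i) M" using Ms_props[OF i] by blast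
  show "\<forall>t\<in>set (map (tyM i) (Ms i)). t \<in> {(0, 0), (0, 1), (1, 0), (1, 1), (2, 2)}"
  proof
    fix t assume "t \<in> set (map (tyM i) (Ms i))"
    then obtain M where M: "M \<in> set (Ms i)" "t = tyM i M" by auto
    have a: "xv i M \<le> 2" "yv i M \<le> 2" "xv i M = 2 \<longleftrightarrow> yv i M = 2"
      using xv_char[OF i pm[OF M(1)]] yv_char[OF i pm[OF M(1)]] by auto
    have "xv i M = 0 \<or> xv i M = 1 \<or> xv i M = 2" "yv i M = 0 \<or> yv i M = 1 \<or> yv i M = 2"
      using a by auto
    then show "t \<in> {(0, 0), (0, 1), (1, 0), (1, 1), (2, 2)}" using a M(2) unfolding tyM_def by auto
  qed
  show "count (mset (map (tyM i) (Ms i))) (2, 2) = 2"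
  proof -
    have "count (mset (map (tyM i) (Ms i))) (2, 2) = length (filter (\<lambda>M. tyM i M = (2,2)) (Ms i))"
      by (simp only: count_len len_filter_map)
    also have "\<dots> = length (filter (\<lambda>M. {x i, y i} \<in> M) (Ms i))"
      apply (rule len_filter_cong)
      using xv_char[OF i pm] yv_char[OF i pm] unfolding tyM_def by auto
    also have "\<dots> = 2" using Ms_props(3)[OF i ingE(4)[OF i]] .
    finally show ?thesis .
  qed
  show "length (filter (\<lambda>t. fst t = 0) (map (tyM i) (Ms i))) = 2"
  proof -
    have "length (filter (\<lambda>t. fst t = 0) (map (tyM i) (Ms i))) = length (filter (\<lambda>M. {x i, x0 i} \<in> M) (Ms i))"
      unfolding len_filter_map apply (rule len_filter_cong)
      using xv_char[OF i pm] unfolding tyM_def by auto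
    also have "\<dots> = 2" using Ms_props(3)[OF i ingE(5)[OF i]] .
    finally show ?thesis .
  qed
  show "length (filter (\<lambda>t. fst t = 1) (map (tyM i) (Ms i))) = 2"
  proof -
    have "length (filter (\<lambda>t. fst t = 1) (map (tyM i) (Ms i))) = length (filter (\<lambda>M. {x i, x1 i} \<in> M) (Ms i))"
      unfolding len_filter_map apply (rule len_filter_cong)
      using xv_char[OF i pm] unfolding tyM_def by auto
    also have "\<dots> = 2" using Ms_props(3)[OF i ingE(6)[OF i]] .
    finally show ?thesis .
  qed
  show "length (filter (\<lambda>t. snd t = 0) (map (tyM i) (Ms i))) = 2"
  proof -
    have "length (filter (\<lambda>t. snd t = 0) (map (tyM i) (Ms i))) = length (filter (\<lambda>M. {y i, y0 i} \<in> M) (Ms i))"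
      unfolding len_filter_map apply (rule len_filter_cong)
      using yv_char[OF i pm] unfolding tyM_def by auto
    also have "\<dots> = 2" using Ms_props(3)[OF i ingE(10)[OF i]] .
    finally show ?thesis .
  qed
  show "length (filter (\<lambda>t. snd t = 1) (map (tyM i) (Ms i))) = 2"
  proof -
    have "length (filter (\<lambda>t. snd t = 1) (map (tyM i) (Ms i))) = length (filter (\<lambda>M. {y i, y1 i} \<in> M) (Ms i))"
      unfolding len_filter_map apply (rule len_filter_cong)
      using yv_char[OF i pm] unfolding tyM_def by auto
    also have "\<dots> = 2" using Ms_props(3)[OF i ingE(11)[OF i]] .
    finally show ?thesis .
  qed
qed

fun bt :: "nat \<Rightarrow> nat" where
  "bt 0 = 0"
| "bt (Suc 0) = (if even k \<and> nn 1 \<ge> 1 then 1 else 0)"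
| "bt (Suc (Suc 0)) = 0"
| "bt (Suc (Suc (Suc j))) = (if nn (Suc (Suc (Suc j))) \<ge> 1 then 1 - bt (Suc (Suc j)) else bt (Suc (Suc j)))"

lemma bt_le: "bt j \<le> 1"
  by (induction j rule: bt.induct) auto

lemma bt_step: "j \<ge> 3 \<Longrightarrow> bt j = (if nn j \<ge> 1 then 1 - bt (j - 1) else bt (j - 1))"
  by (cases j rule: bt.cases) auto

definition kd :: "nat \<Rightarrow> nat \<Rightarrow> bk" where
  "kd i b = (if i = 0 then [Zb, CPb (1 - bt (k - 1)), QPb 0] ! b
     else if i = 1 then [QPb 0, Zb, CPb 1] ! b
     else if i = 2 then (if even k then [Zb, QPb 0, CPb (1 - bt 1)] else [CPb (1 - bt 1), QPb 0, Zb]) ! b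
     else (if even (i + k) then [Zb, CPb (1 - bt (i - 1)), QPb 0] else [QPb 0, CPb (1 - bt (i - 1)), Zb]) ! b)"

definition wantf :: "nat \<Rightarrow> nat \<Rightarrow> nat \<times> nat" where
  "wantf i r = bv (nn i) (kd i (r div 2)) (r mod 2)"

lemma wl_mset:
  assumes i: "i < k"
  shows "mset (map (wantf i) [0..<6]) = pat (nn i)"
proof -
  have up: "[0..<6] = [0,1,2,3,4,5::nat]" by (simp add: upt_rec)
  have m: "mset (map (wantf i) [0..<6]) = blk (nn i) (kd i 0) + blk (nn i) (kd i 1) + blk (nn i) (kd i 2)"
    unfolding up wantf_def blk_def by simp
  have n: "nn i \<le> 2" using tys_pat[OF i] by blast
  have bl: "\<And>a b. a \<le> 1 \<Longrightarrow> b \<le> 1 \<Longrightarrow> blk (nn i) Zb + blk (nn i) (CPb a) + blk (nn i) (QPb b) = pat (nn i)"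
    using blk_pat[OF n] by blast
  define ca where "ca = (if i = 0 then 1 - bt (k - 1) else if i = 1 then 1 else if i = 2 then 1 - bt 1 else 1 - bt (i - 1))"
  have "blk (nn i) (kd i 0) + blk (nn i) (kd i 1) + blk (nn i) (kd i 2)
          = blk (nn i) Zb + blk (nn i) (CPb ca) + blk (nn i) (QPb 0)"
    unfolding kd_def ca_def
    by (cases "i = 0"; cases "i = 1"; cases "i = 2"; cases "even k"; cases "even (i+k)") (simp_all add: ac_simps)
  moreover have "ca \<le> 1" unfolding ca_def by simp
  ultimately show ?thesis using m bl[of ca 0] by simp
qed

definition Lr :: "nat \<Rightarrow> 'a set set list" where
  "Lr i = (SOME L. mset L = mset (Ms i) \<and> map (tyM i) L = map (wantf i) [0..<6])"

lemma Lr_props: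
  assumes i: "i < k"
  shows "mset (Lr i) = mset (Ms i)" "map (tyM i) (Lr i) = map (wantf i) [0..<6]"
proof -
  have "mset (map (tyM i) (Ms i)) = mset (map (wantf i) [0..<6])"
    using tys_pat[OF i] wl_mset[OF i] by simp
  then have "\<exists>L. mset L = mset (Ms i) \<and> map (tyM i) L = map (wantf i) [0..<6]"
    using mset_map_lift by blast
  then show "mset (Lr i) = mset (Ms i)" "map (tyM i) (Lr i) = map (wantf i) [0..<6]"
    unfolding Lr_def by (metis (mono_tags, lifting) someI_ex)+
qed

definition rho :: "nat \<Rightarrow> nat \<Rightarrow> 'a set set" where
  "rho i r = Lr i ! r"

lemma Lr_len: "i < k \<Longrightarrow> length (Lr i) = 6"
  using Lr_props(2) by (metis length_map length_upt minus_nat.diff_0)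

lemma rho_pm: "i < k \<Longrightarrow> r < 6 \<Longrightarrow> perfect_matching (V i) (E i) (rho i r)"
proof -
  assume i: "i < k" and r: "r < 6"
  have "rho i r \<in> set (Lr i)" unfolding rho_def using Lr_len[OF i] r by simp
  then have "rho i r \<in> set (Ms i)" using Lr_props(1)[OF i] by (metis set_mset_mset)
  then show ?thesis using Ms_props(2)[OF i] by blast
qed

lemma rho_typ: "i < k \<Longrightarrow> r < 6 \<Longrightarrow> xv i (rho i r) = fst (wantf i r) \<and> yv i (rho i r) = snd (wantf i r)"
proof -
  assume i: "i < k" and r: "r < 6"
  have "map (tyM i) (Lr i) ! r = map (wantf i) [0..<6] ! r" using Lr_props(2)[OF i] by simp
  then have "tyM i (rho i r) = wantf i r" unfolding rho_def using Lr_len[OF i] r by simp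
  then show ?thesis unfolding tyM_def by (metis fst_conv snd_conv)
qed

lemma rho_count: "i < k \<Longrightarrow> e \<in> E i \<Longrightarrow> card {r. r < 6 \<and> e \<in> rho i r} = 2"
proof -
  assume i: "i < k" and e: "e \<in> E i"
  have "card {r. r < 6 \<and> e \<in> rho i r} = length (filter (\<lambda>M. e \<in> M) (Lr i))"
    unfolding length_filter_conv_card rho_def Lr_len[OF i] ..
  also have "\<dots> = length (filter (\<lambda>M. e \<in> M) (Ms i))" using len_filter_mset[OF Lr_props(1)[OF i]] .
  also have "\<dots> = 2" using Ms_props(3)[OF i e] .
  finally show ?thesis .
qed

end

context MG begin

definition sk :: "nat \<Rightarrow> nat" where "sk j = (if Suc j = k then 0 else Suc j)"

lemma sk_mod: "j < k \<Longrightarrow> sk j = (j + 1) mod k"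
  unfolding sk_def by auto

lemma sk_lt: "j < k \<Longrightarrow> sk j < k" unfolding sk_def using k3 by auto

lemma sk_ne: "j < k \<Longrightarrow> sk j \<noteq> j" unfolding sk_def using k3 by auto

lemma bt01: "bt j = 0 \<or> bt j = 1" using bt_le[of j] by auto

definition sblk :: "nat \<Rightarrow> nat" where
  "sblk i = (if i = 0 then 0 else if i = 1 then 1 else if even (i + k) then 0 else 2)"

lemma kd_cases:
  assumes "b < 3"
  shows "(kd i b = Zb \<longleftrightarrow> b = sblk i) \<and> (\<forall>a. kd i b = CPb a \<longrightarrow> a \<le> 1) \<and> (\<forall>a. kd i b = QPb a \<longrightarrow> a \<le> 1)"
proof -
  have "b = 0 \<or> b = 1 \<or> b = 2" using assms by auto
  then show ?thesis unfolding kd_def sblk_def by (elim disjE) auto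
qed

lemma bv_vals:
  assumes "\<forall>a. K = CPb a \<longrightarrow> a \<le> 1" "\<forall>a. K = QPb a \<longrightarrow> a \<le> 1"
  shows "(fst (bv n K p) = 2 \<longleftrightarrow> K = Zb) \<and> (snd (bv n K p) = 2 \<longleftrightarrow> K = Zb)
     \<and> fst (bv n K p) \<le> 2 \<and> snd (bv n K p) \<le> 2"
  using assms by (cases K) auto

lemma wantf_vals:
  assumes "r < 6"
  shows "(fst (wantf i r) = 2 \<longleftrightarrow> r div 2 = sblk i) \<and> (snd (wantf i r) = 2 \<longleftrightarrow> r div 2 = sblk i)
     \<and> fst (wantf i r) \<le> 2 \<and> snd (wantf i r) \<le> 2"
proof -
  have b: "r div 2 < 3" using assms by auto
  show ?thesis unfolding wantf_def using bv_vals[of "kd i (r div 2)"] kd_cases[OF b, of i] by metis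
qed

definition Yv :: "nat \<Rightarrow> nat \<Rightarrow> nat" where "Yv j r = snd (wantf j r)"
definition Xv :: "nat \<Rightarrow> nat \<Rightarrow> nat" where "Xv j r = fst (wantf (sk j) r)"

definition tj :: "nat \<Rightarrow> nat \<Rightarrow> bool" where "tj j r \<longleftrightarrow> Yv j r \<noteq> 2 \<and> Xv j r \<noteq> 2"

definition tjc :: "nat \<Rightarrow> nat \<Rightarrow> bool" where
  "tjc r j \<longleftrightarrow> (if r div 2 = 1 then 2 \<le> j else if r div 2 = 0 then odd k \<and> j = 1
      else if even k then j \<le> 1 else j = 0)"

lemma tj_char:
  assumes j: "j < k" and r: "r < 6"
  shows "tj j r \<longleftrightarrow> tjc r j"
proof -
  have t: "tj j r \<longleftrightarrow> r div 2 \<noteq> sblk j \<and> r div 2 \<noteq> sblk (sk j)"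
    unfolding tj_def Yv_def Xv_def using wantf_vals[OF r] by blast
  have b: "r div 2 = 0 \<or> r div 2 = 1 \<or> r div 2 = 2" using r by auto
  consider "j = 0" | "j = 1" | "j = 2" "k = 3" | "j \<ge> 2" "Suc j < k" | "j \<ge> 3" "Suc j = k"
    using j k3 by linarith
  then show ?thesis
  proof cases
    case 1
    then have s: "sk j = 1" unfolding sk_def using k3 by auto
    show ?thesis unfolding t s tjc_def sblk_def using 1 b by auto
  next
    case 2
    then have s: "sk j = 2" unfolding sk_def using k3 by auto
    show ?thesis unfolding t s tjc_def sblk_def using 2 b by auto
  next
    case 3
    then have s: "sk j = 0" unfolding sk_def by auto
    show ?thesis unfolding t s tjc_def sblk_def using 3 b by auto
  next
    case 4
    then have s: "sk j = Suc j" unfolding sk_def by auto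
    show ?thesis unfolding t s tjc_def sblk_def using 4 b by auto
  next
    case 5
    then have s: "sk j = 0" unfolding sk_def by auto
    have "odd (j + k)" using 5 by presburger
    then show ?thesis unfolding t s tjc_def sblk_def using 5 b by auto
  qed
qed

end

context MG begin

lemma kd0: "kd 0 = (\<lambda>b. [Zb, CPb (1 - bt (k - 1)), QPb 0] ! b)" unfolding kd_def by auto
lemma kd1: "kd 1 = (\<lambda>b. [QPb 0, Zb, CPb 1] ! b)" unfolding kd_def by auto
lemma kd2: "kd 2 = (\<lambda>b. (if even k then [Zb, QPb 0, CPb (1 - bt 1)] else [CPb (1 - bt 1), QPb 0, Zb]) ! b)"
  unfolding kd_def by auto
lemma kd3: "i \<ge> 3 \<Longrightarrow> kd i = (\<lambda>b. (if even (i + k) then [Zb, CPb (1 - bt (i - 1)), QPb 0] else [QPb 0, CPb (1 - bt (i - 1)), Zb]) ! b)"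
  unfolding kd_def by auto

lemma bt2: "bt 2 = 0" by (simp add: numeral_2_eq_2)

lemma R4b:
  assumes j: "j < k" and b: "b < 3" and p: "p < 2"
  shows "snd (bv (nn j) (kd j b) p) \<noteq> fst (bv (nn (sk j)) (kd (sk j) b) p)"
proof -
  have b: "b = 0 \<or> b = 1 \<or> b = 2" using b by auto
  have p: "p = 0 \<or> p = 1" using p by auto
  have bb: "bt 1 = 0 \<or> bt 1 = 1" "bt (k - 1) = 0 \<or> bt (k - 1) = 1" "bt (j - 1) = 0 \<or> bt (j - 1) = 1"
    using bt01 by blast+
  consider "j = 0" | "j = 1" | "j = 2" "k = 3" | "j = 2" "k > 3" | "j \<ge> 3" "Suc j < k" | "j \<ge> 3" "Suc j = k"
    using j k3 by linarith
  then show ?thesis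
  proof cases
    case 1
    have s: "sk 0 = 1" unfolding sk_def using k3 by auto
    show ?thesis using b p bb(2) unfolding 1 s kd0 kd1
      by (elim disjE) auto
  next
    case 2
    have s: "sk 1 = 2" unfolding sk_def using k3 by auto
    show ?thesis using b p unfolding 2 s kd1 kd2
      by (cases "even k"; cases "nn 1 \<ge> 1"; elim disjE) simp_all
  next
    case 3
    have s: "sk 2 = 0" unfolding sk_def using 3 by auto
    have kk: "k - 1 = 2" using 3 by simp
    have ok: "\<not> even k" using 3 by simp
    show ?thesis using b p ok unfolding 3(1) s kd0 kd2 kk bt2
      by (elim disjE) simp_all
  next
    case 4
    have s: "sk 2 = 3" unfolding sk_def using 4 by auto
    have kd33: "kd 3 = (\<lambda>b. (if odd k then [Zb, CPb 1, QPb 0] else [QPb 0, CPb 1, Zb]) ! b)"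
      unfolding kd3[of 3, OF order.refl] by (simp add: bt2)
    show ?thesis using b p unfolding 4(1) s kd2 kd33
      by (cases "even k"; elim disjE) simp_all
  next
    case 5
    then have s: "sk j = Suc j" unfolding sk_def by auto
    have st: "bt j = (if nn j \<ge> 1 then 1 - bt (j - 1) else bt (j - 1))" using bt_step 5 by blast
    have k1: "kd j = (\<lambda>b. (if even (j+k) then [Zb, CPb (1 - bt (j-1)), QPb 0] else [QPb 0, CPb (1 - bt (j-1)), Zb]) ! b)"
      using kd3 5 by simp
    have k2: "kd (Suc j) = (\<lambda>b. (if even (j+k) then [QPb 0, CPb (1 - bt j), Zb] else [Zb, CPb (1 - bt j), QPb 0]) ! b)"
      using kd3[of "Suc j"] 5 by auto
    show ?thesis unfolding s k1 k2
      by (cases "even (j+k)"; insert b p bb(3) st; elim disjE) simp_all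
  next
    case 6
    then have s: "sk j = 0" unfolding sk_def by auto
    have st: "bt j = (if nn j \<ge> 1 then 1 - bt (j - 1) else bt (j - 1))" using bt_step 6 by blast
    have kk: "k - 1 = j" using 6 by simp
    have ev: "\<not> even (j + k)" using 6 by presburger
    have k1: "kd j = (\<lambda>b. [QPb 0, CPb (1 - bt (j-1)), Zb] ! b)"
      using kd3 6 ev by simp
    have k0: "kd 0 = (\<lambda>b. [Zb, CPb (1 - bt j), QPb 0] ! b)" unfolding kd0 kk ..
    show ?thesis unfolding s k1 k0 using b p bb(3) st
      by (elim disjE) simp_all
  qed
qed

lemma R4:
  assumes j: "j < k" and r: "r < 6"
  shows "Yv j r \<noteq> Xv j r"
  unfolding Yv_def Xv_def wantf_def using R4b[OF j, of "r div 2" "r mod 2"] r by simp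

end

context MG begin

definition PE :: "'b mvert set set" where
  "PE = {{M_path k ! i, M_path k ! (i + 1)} | i. i + 1 < length (M_path k :: 'b mvert list)}"

definition PD :: "'b mvert set set" where
  "PD = {{Cv i, Pv (i - 2)} | i. 2 \<le> i \<and> i < k}"

lemma len_path: "length (M_path k) = k" unfolding M_path_def using k3 by simp

lemma nth_path: "i < k \<Longrightarrow> M_path k ! i = (if i = 0 then Cv 1 else if i = k - 1 then Cv 0 else Pv (i - 1))"
  unfolding M_path_def using k3 by (auto simp: nth_append nth_Cons')

lemma PE_I: "i + 1 < k \<Longrightarrow> {M_path k ! i, M_path k ! (i + 1)} \<in> PE"
  unfolding PE_def len_path by blast

lemma PE_eq: "PE = {{Cv 1, Pv 0}, {Pv (k - 3), Cv 0}} \<union> {{Pv m, Pv (Suc m)} | m. Suc m < k - 2}"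
proof
  show "PE \<subseteq> {{Cv 1, Pv 0}, {Pv (k - 3), Cv 0}} \<union> {{Pv m, Pv (Suc m)} | m. Suc m < k - 2}"
  proof
    fix e assume "e \<in> PE"
    then obtain i where i: "i + 1 < k" "e = {M_path k ! i, M_path k ! (i + 1)}"
      unfolding PE_def len_path by blast
    show "e \<in> {{Cv 1, Pv 0}, {Pv (k - 3), Cv 0}} \<union> {{Pv m, Pv (Suc m)} | m. Suc m < k - 2}"
    proof (cases "i = 0")
      case True
      have "Suc 0 \<noteq> k - Suc 0" using k3 by simp
      then show ?thesis using i k3 True by (simp add: nth_path)
    next
      case False
      show ?thesis
      proof (cases "i + 2 = k")
        case True
        have a1: "M_path k ! i = Pv (k - 3)" using nth_path[of i] True False i by auto
        have a2: "M_path k ! (i + 1) = Cv 0" using nth_path[of "i+1"] True i by auto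
        have "e = {Pv (k - 3), Cv 0}" using i(2) by (simp only: a1 a2)
        then show ?thesis by simp
      next
        case False2: False
        have ar: "i \<noteq> k - 1" "i + 1 \<noteq> k - 1" "Suc (i - 1) = i" "i < k" "i + 1 - 1 = i" "i + 1 \<noteq> 0" using i False False2 by arith+
        have a1: "M_path k ! i = Pv (i - 1)" using nth_path[OF ar(4)] ar False by simp
        have a2: "M_path k ! (i + 1) = Pv (Suc (i - 1))" using nth_path[OF i(1)] ar by simp
        have "e = {Pv (i - 1), Pv (Suc (i - 1))}" using i(2) by (simp only: a1 a2)
        moreover have "Suc (i - 1) < k - 2" using i False False2 by linarith
        ultimately show ?thesis by blast
      qed
    qed
  qed
next
  show "{{Cv 1, Pv 0}, {Pv (k - 3), Cv 0}} \<union> {{Pv m, Pv (Suc m)} | m. Suc m < k - 2} \<subseteq> PE"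
  proof
    fix e assume "e \<in> {{Cv 1, Pv 0}, {Pv (k - 3), Cv 0}} \<union> {{Pv m, Pv (Suc m)} | m. Suc m < k - 2}"
    then consider "e = {Cv 1, Pv 0}" | "e = {Pv (k - 3), Cv 0}" | m where "e = {Pv m, Pv (Suc m)}" "Suc m < k - 2"
      by blast
    then show "e \<in> PE"
    proof cases
      case 1
      have "Suc 0 \<noteq> k - Suc 0" using k3 by simp
      then have "e = {M_path k ! 0, M_path k ! (0 + 1)}" using 1 k3 by (simp add: nth_path)
      then show ?thesis using PE_I[of 0] k3 by simp
    next
      case 2
      have ar: "k - 2 \<noteq> k - 1" "k - 2 - 1 = k - 3" "k - 2 \<noteq> 0" "k - 2 + 1 = k - 1" "k - 2 < k" "k - 1 < k" using k3 by auto
      have a1: "M_path k ! (k - 2) = Pv (k - 3)" using nth_path[OF ar(5)] ar by simp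
      have a2: "M_path k ! (k - 2 + 1) = Cv 0" unfolding ar(4) using nth_path[OF ar(6)] k3 by simp
      have "e = {M_path k ! (k - 2), M_path k ! (k - 2 + 1)}" using 2 by (simp only: a1 a2)
      moreover have "k - 2 + 1 < k" using k3 by simp
      ultimately show ?thesis using PE_I[of "k-2"] by simp
    next
      case 3
      have ar: "Suc m < k" "Suc m + 1 < k" "Suc m \<noteq> k - 1" "Suc m + 1 \<noteq> k - 1" using 3 by arith+
      have a1: "M_path k ! (Suc m) = Pv m" using nth_path[OF ar(1)] ar by simp
      have a2: "M_path k ! (Suc m + 1) = Pv (Suc m)" using nth_path[OF ar(2)] ar by simp
      have "e = {M_path k ! (Suc m), M_path k ! (Suc m + 1)}" using 3 by (simp only: a1 a2)
      then show ?thesis using PE_I[of "Suc m"] ar by simp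
    qed
  qed
qed

definition TEc :: "nat \<Rightarrow> 'b mvert set set" where
  "TEc c = (if c = 1 then {{Cv i, Pv (i - 2)} | i. 2 \<le> i \<and> i < k}
     else if c = 0 then (if even k then {{Pv m, Pv (Suc m)} | m. even m \<and> Suc m < k - 2}
           else {{Cv 1, Pv 0}} \<union> {{Pv m, Pv (Suc m)} | m. odd m \<and> Suc m < k - 2})
     else (if even k then {{Cv 1, Pv 0}, {Pv (k - 3), Cv 0}} \<union> {{Pv m, Pv (Suc m)} | m. odd m \<and> Suc m < k - 3}
           else {{Pv (k - 3), Cv 0}} \<union> {{Pv m, Pv (Suc m)} | m. even m \<and> Suc m < k - 3}))"

lemma PE_pp: "Suc m < k - 2 \<Longrightarrow> {Pv m, Pv (Suc m)} \<in> PE"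
  unfolding PE_eq by blast
lemma PE_c1: "{Cv 1, Pv 0} \<in> PE" unfolding PE_eq by blast
lemma PE_c0: "{Pv (k - 3), Cv 0} \<in> PE" unfolding PE_eq by blast

lemma TEc_sub: "c < 3 \<Longrightarrow> TEc c \<subseteq> PE \<union> PD"
proof -
  assume "c < 3"
  then have c: "c = 0 \<or> c = 1 \<or> c = 2" by auto
  have pp: "\<forall>m. Suc m < k - 2 \<longrightarrow> {Pv m, Pv (Suc m)} \<in> PE" using PE_pp by blast
  have pp3: "\<forall>m. Suc m < k - 3 \<longrightarrow> {Pv m, Pv (Suc m)} \<in> PE" 
  proof (intro allI impI)
    fix m assume "Suc m < k - 3" then have "Suc m < k - 2" by arith
    then show "{Pv m, Pv (Suc m)} \<in> PE" by (rule PE_pp)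
  qed
  show ?thesis
  proof (cases "even k")
    case True
    show ?thesis using c True unfolding TEc_def PD_def
      apply (elim disjE)
      subgoal using pp by auto
      subgoal by auto
      subgoal using pp3 PE_c1 PE_c0 by auto
      done
  next
    case False
    show ?thesis using c False unfolding TEc_def PD_def
      apply (elim disjE)
      subgoal using pp PE_c1 by auto
      subgoal by auto
      subgoal using pp3 PE_c0 by auto
      done
  qed
qed

lemma PEPD_verts: "e \<in> PE \<union> PD \<Longrightarrow> v \<in> e \<Longrightarrow> \<exists>n. v = Cv n \<or> v = Pv n"
  unfolding PE_eq PD_def by blast

lemma TEc_verts: "c < 3 \<Longrightarrow> e \<in> TEc c \<Longrightarrow> v \<in> e \<Longrightarrow> \<exists>n. v = Cv n \<or> v = Pv n"
  using TEc_sub PEPD_verts by blast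

end

context MG begin

definition ePv :: "nat \<Rightarrow> nat \<Rightarrow> 'b mvert set" where
  "ePv c m = (if c = 1 then {Cv (m + 2), Pv m}
     else if c = 0 then (if even k then (if even m then {Pv m, Pv (Suc m)} else {Pv (m - 1), Pv m})
        else (if m = 0 then {Cv 1, Pv 0} else if odd m then {Pv m, Pv (Suc m)} else {Pv (m - 1), Pv m}))
     else (if even k then (if m = 0 then {Cv 1, Pv 0} else if m = k - 3 then {Pv (k - 3), Cv 0}
          else if odd m then {Pv m, Pv (Suc m)} else {Pv (m - 1), Pv m})
        else (if m = k - 3 then {Pv (k - 3), Cv 0} else if even m then {Pv m, Pv (Suc m)} else {Pv (m - 1), Pv m})))"

lemma pair_mem: "m > 0 \<Longrightarrow> {Pv (m - 1), Pv m} = {Pv (m - 1), Pv (Suc (m - 1))}" by simp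

lemma T2_in:
  assumes c: "c < 3" and m: "m < k - 2"
  shows "ePv c m \<in> TEc c \<and> Pv m \<in> ePv c m"
proof -
  have cc: "c = 0 \<or> c = 1 \<or> c = 2" using c by auto
  show ?thesis
  proof (cases "c = 1")
    case True
    have "ePv c m = {Cv (m + 2), Pv (m + 2 - 2)}" unfolding ePv_def using True by simp
    moreover have "2 \<le> m + 2 \<and> m + 2 < k" using m by arith
    ultimately show ?thesis unfolding TEc_def using True by (auto simp: ePv_def)
  next
    case c1: False
    show ?thesis
    proof (cases "c = 0")
      case c0: True
      show ?thesis
      proof (cases "even k")
        case ek: True
        show ?thesis
        proof (cases "even m")
          case True
          have "Suc m < k - 2" using m True ek by presburger
          then show ?thesis unfolding TEc_def ePv_def using True ek c0 by auto
        next
          case False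
          then have "m > 0" by (metis odd_pos)
          then have "{Pv (m - 1), Pv m} = {Pv (m - 1), Pv (Suc (m - 1))}" "even (m - 1)" "Suc (m - 1) < k - 2"
            using False m by auto
          then show ?thesis unfolding TEc_def ePv_def using False ek c0 by auto
        qed
      next
        case ek: False
        show ?thesis
        proof (cases "m = 0")
          case True
          then show ?thesis unfolding TEc_def ePv_def using ek c0 by auto
        next
          case m0: False
          show ?thesis
          proof (cases "odd m")
            case True
            have "Suc m < k - 2" using m True ek by presburger
            then show ?thesis unfolding TEc_def ePv_def using True ek c0 by auto
          next
            case False
            then have "{Pv (m - 1), Pv m} = {Pv (m - 1), Pv (Suc (m - 1))}" "odd (m - 1)" "Suc (m - 1) < k - 2"
              using m0 m by auto
            then show ?thesis unfolding TEc_def ePv_def using False ek c0 m0 by auto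
          qed
        qed
      qed
    next
      case c0: False
      then have c2: "c = 2" using cc c1 by auto
      show ?thesis
      proof (cases "even k")
        case ek: True
        then have k4: "k \<ge> 4" using k3 by presburger
        show ?thesis
        proof (cases "m = 0")
          case True
          then show ?thesis unfolding TEc_def ePv_def using ek c2 by auto
        next
          case m0: False
          show ?thesis
          proof (cases "m = k - 3")
            case True
            then show ?thesis unfolding TEc_def ePv_def using ek c2 m0 by auto
          next
            case m3: False
            show ?thesis
            proof (cases "odd m")
              case True
              have "Suc m < k - 3" using m True ek m3 by presburger
              then show ?thesis unfolding TEc_def ePv_def using True ek c2 m0 m3 by auto
            next
              case False
              then have "{Pv (m - 1), Pv m} = {Pv (m - 1), Pv (Suc (m - 1))}" "odd (m - 1)" "Suc (m - 1) < k - 3"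
                using m0 m m3 by auto
              then show ?thesis unfolding TEc_def ePv_def using False ek c2 m0 m3 by auto
            qed
          qed
        qed
      next
        case ek: False
        show ?thesis
        proof (cases "m = k - 3")
          case True
          then show ?thesis unfolding TEc_def ePv_def using ek c2 by auto
        next
          case m3: False
          show ?thesis
          proof (cases "even m")
            case True
            have "Suc m < k - 3" using m True ek m3 by presburger
            then show ?thesis unfolding TEc_def ePv_def using True ek c2 m3 by auto
          next
            case False
            then have "m > 0" by (metis odd_pos)
            then have "{Pv (m - 1), Pv m} = {Pv (m - 1), Pv (Suc (m - 1))}" "even (m - 1)" "Suc (m - 1) < k - 3"
              using False m m3 by auto
            then show ?thesis unfolding TEc_def ePv_def using False ek c2 m3 by auto
          qed
        qed
      qed
    qed
  qed
qed


lemma T2_uni: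
  assumes c: "c < 3" and e: "e \<in> TEc c" and v: "Pv m \<in> e"
  shows "e = ePv c m"
proof -
  have cc: "c = 0 \<or> c = 1 \<or> c = 2" using c by auto
  show ?thesis
  proof (cases "c = 1")
    case True
    then obtain i where i: "e = {Cv i, Pv (i - 2)}" "2 \<le> i" "i < k" using e unfolding TEc_def by auto
    then have "i = m + 2" using v by auto
    then show ?thesis using i True unfolding ePv_def by simp
  next
    case c1: False
    show ?thesis
    proof (cases "c = 0")
      case c0: True
      show ?thesis
      proof (cases "even k")
        case ek: True
        then obtain a where a: "e = {Pv a, Pv (Suc a)}" "even a" using e c0 unfolding TEc_def by auto
        then have "m = a \<or> m = Suc a" using v by auto
        then show ?thesis using a ek c0 unfolding ePv_def by auto
      next
        case ek: False
        then have "e = {Cv 1, Pv 0} \<or> (\<exists>a. e = {Pv a, Pv (Suc a)} \<and> odd a)" using e c0 unfolding TEc_def by auto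
        then show ?thesis
        proof
          assume "e = {Cv 1, Pv 0}" then show ?thesis using v ek c0 unfolding ePv_def by auto
        next
          assume "\<exists>a. e = {Pv a, Pv (Suc a)} \<and> odd a"
          then obtain a where a: "e = {Pv a, Pv (Suc a)}" "odd a" by blast
          then have "m = a \<or> m = Suc a" using v by auto
          then show ?thesis using a ek c0 unfolding ePv_def by auto
        qed
      qed
    next
      case c0: False
      then have c2: "c = 2" using cc c1 by auto
      show ?thesis
      proof (cases "even k")
        case ek: True
        then have k4: "k \<ge> 4" using k3 by presburger
        have "e = {Cv 1, Pv 0} \<or> e = {Pv (k - 3), Cv 0} \<or> (\<exists>a. e = {Pv a, Pv (Suc a)} \<and> odd a \<and> Suc a < k - 3)"
          using e c2 ek unfolding TEc_def by auto
        then show ?thesis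
        proof (elim disjE)
          assume "e = {Cv 1, Pv 0}" then show ?thesis using v ek c2 unfolding ePv_def by auto
        next
          assume "e = {Pv (k - 3), Cv 0}" then show ?thesis using v ek c2 k4 unfolding ePv_def by auto
        next
          assume "\<exists>a. e = {Pv a, Pv (Suc a)} \<and> odd a \<and> Suc a < k - 3"
          then obtain a where a: "e = {Pv a, Pv (Suc a)}" "odd a" "Suc a < k - 3" by blast
          then have "m = a \<or> m = Suc a" using v by auto
          then show ?thesis using a ek c2 unfolding ePv_def by auto
        qed
      next
        case ek: False
        have "e = {Pv (k - 3), Cv 0} \<or> (\<exists>a. e = {Pv a, Pv (Suc a)} \<and> even a \<and> Suc a < k - 3)"
          using e c2 ek unfolding TEc_def by auto
        then show ?thesis
        proof (elim disjE)
          assume "e = {Pv (k - 3), Cv 0}" then show ?thesis using v ek c2 unfolding ePv_def by auto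
        next
          assume "\<exists>a. e = {Pv a, Pv (Suc a)} \<and> even a \<and> Suc a < k - 3"
          then obtain a where a: "e = {Pv a, Pv (Suc a)}" "even a" "Suc a < k - 3" by blast
          then have "m = a \<or> m = Suc a" using v by auto
          then show ?thesis using a ek c2 unfolding ePv_def by auto
        qed
      qed
    qed
  qed
qed

lemma T2: "c < 3 \<Longrightarrow> m < k - 2 \<Longrightarrow> \<exists>!e. e \<in> TEc c \<and> Pv m \<in> e"
  using T2_in T2_uni by metis

end

context MG begin

lemma T3:
  assumes c: "c < 3" and j: "j < k"
  shows "(\<exists>e\<in>TEc c. Cv j \<in> e) \<longleftrightarrow> tjc (2 * c) j"
proof -
  have cc: "c = 0 \<or> c = 1 \<or> c = 2" using c by auto
  have t: "tjc (2 * c) j \<longleftrightarrow> (if c = 1 then 2 \<le> j else if c = 0 then odd k \<and> j = 1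
      else if even k then j \<le> 1 else j = 0)" unfolding tjc_def by simp
  show ?thesis
  proof (cases "c = 1")
    case True
    have "(\<exists>e\<in>TEc c. Cv j \<in> e) \<longleftrightarrow> 2 \<le> j"
    proof
      assume "\<exists>e\<in>TEc c. Cv j \<in> e"
      then show "2 \<le> j" using True unfolding TEc_def by auto
    next
      assume "2 \<le> j"
      then have "{Cv j, Pv (j - 2)} \<in> TEc c" using True j unfolding TEc_def by auto
      then show "\<exists>e\<in>TEc c. Cv j \<in> e" by blast
    qed
    then show ?thesis using t True by simp
  next
    case c1: False
    show ?thesis
    proof (cases "c = 0")
      case c0: True
      show ?thesis using c0 t unfolding TEc_def by (cases "even k") auto
    next
      case c0: False
      then have c2: "c = 2" using cc c1 by auto
      show ?thesis using c2 t unfolding TEc_def by (cases "even k") auto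
    qed
  qed
qed

lemma T3u:
  assumes c: "c < 3" and e: "e \<in> TEc c" and e': "e' \<in> TEc c" and v: "Cv j \<in> e" "Cv j \<in> e'"
  shows "e = e'"
proof -
  have cc: "c = 0 \<or> c = 1 \<or> c = 2" using c by auto
  have "\<And>f. f \<in> TEc c \<Longrightarrow> Cv j \<in> f \<Longrightarrow> f = (if c = 1 then {Cv j, Pv (j - 2)} else if j = 1 then {Cv 1, Pv 0} else {Pv (k - 3), Cv 0})"
    using cc unfolding TEc_def by (auto split: if_splits)
  then show ?thesis using e e' v by metis
qed

lemma cls:
  assumes e: "e \<in> PE \<union> PD"
  shows "\<exists>c0<3. \<forall>c<3. (e \<in> TEc c \<longleftrightarrow> c = c0)"
proof -
  have "e \<in> PD \<or> e = {Cv 1, Pv 0} \<or> e = {Pv (k - 3), Cv 0} \<or> (\<exists>m. e = {Pv m, Pv (Suc m)} \<and> Suc m < k - 2)"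
    using e unfolding PE_eq by blast
  then show ?thesis
  proof (elim disjE)
    assume "e \<in> PD"
    then obtain i where i: "e = {Cv i, Pv (i - 2)}" "2 \<le> i" "i < k" unfolding PD_def by blast
    have "\<forall>c<3. (e \<in> TEc c \<longleftrightarrow> c = 1)"
    proof (intro allI impI)
      fix c :: nat assume "c < 3"
      then have "c = 0 \<or> c = 1 \<or> c = 2" by auto
      then show "e \<in> TEc c \<longleftrightarrow> c = 1" using i unfolding TEc_def by (auto simp: doubleton_eq_iff)
    qed
    then show ?thesis by (intro exI[of _ 1]) auto
  next
    assume e1: "e = {Cv 1, Pv 0}"
    have "\<forall>c<3. (e \<in> TEc c \<longleftrightarrow> c = (if even k then 2 else 0))"
    proof (intro allI impI)
      fix c :: nat assume "c < 3"
      then have "c = 0 \<or> c = 1 \<or> c = 2" by auto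
      then show "e \<in> TEc c \<longleftrightarrow> c = (if even k then 2 else 0)" using e1 unfolding TEc_def
        by (auto simp: doubleton_eq_iff)
    qed
    then show ?thesis by (intro exI[of _ "if even k then 2 else 0"]) auto
  next
    assume e1: "e = {Pv (k - 3), Cv 0}"
    have "\<forall>c<3. (e \<in> TEc c \<longleftrightarrow> c = 2)"
    proof (intro allI impI)
      fix c :: nat assume "c < 3"
      then have "c = 0 \<or> c = 1 \<or> c = 2" by auto
      then show "e \<in> TEc c \<longleftrightarrow> c = 2" using e1 unfolding TEc_def
        by (auto simp: doubleton_eq_iff)
    qed
    then show ?thesis by (intro exI[of _ 2]) auto
  next
    assume "\<exists>m. e = {Pv m, Pv (Suc m)} \<and> Suc m < k - 2"
    then obtain m where m: "e = {Pv m, Pv (Suc m)}" "Suc m < k - 2" by blast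
    define c0 where "c0 = (if even k = even m then 0 else 2::nat)"
    have eq: "\<And>a. {Pv m, Pv (Suc m)} = {Pv a, Pv (Suc a)} \<longleftrightarrow> a = m" by (auto simp: doubleton_eq_iff)
    have b3: "Suc m < k - 3 \<or> even k = even m" using m(2) by presburger
    have "\<forall>c<3. (e \<in> TEc c \<longleftrightarrow> c = c0)"
    proof (intro allI impI)
      fix c :: nat assume "c < 3"
      then have "c = 0 \<or> c = 1 \<or> c = 2" by auto
      then show "e \<in> TEc c \<longleftrightarrow> c = c0" using m b3 unfolding TEc_def c0_def
        by (elim disjE) (auto simp: doubleton_eq_iff)
    qed
    then show ?thesis unfolding c0_def by (intro exI[of _ c0]) (auto simp: c0_def)
  qed
qed

lemma T5:
  assumes e: "e \<in> PE \<union> PD"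
  shows "card {r. r < 6 \<and> e \<in> TEc (r div 2)} = 2"
proof -
  obtain c0 where c0: "c0 < 3" "\<forall>c<3. (e \<in> TEc c \<longleftrightarrow> c = c0)" using cls[OF e] by blast
  have "{r. r < 6 \<and> e \<in> TEc (r div 2)} = {2 * c0, 2 * c0 + 1}"
  proof (rule set_eqI)
    fix r
    show "r \<in> {r. r < 6 \<and> e \<in> TEc (r div 2)} \<longleftrightarrow> r \<in> {2 * c0, 2 * c0 + 1}"
    proof
      assume "r \<in> {r. r < 6 \<and> e \<in> TEc (r div 2)}"
      then have "r div 2 = c0" using c0 by auto
      then show "r \<in> {2 * c0, 2 * c0 + 1}" by auto
    next
      assume "r \<in> {2 * c0, 2 * c0 + 1}"
      then have "r div 2 = c0" "r < 6" using c0 by auto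
      then show "r \<in> {r. r < 6 \<and> e \<in> TEc (r div 2)}" using c0 by auto
    qed
  qed
  then show ?thesis by simp
qed

end

context MG begin

definition pj :: "nat \<Rightarrow> nat" where "pj i = (if i = 0 then k - 1 else i - 1)"

lemma pj_sk: "j < k \<Longrightarrow> pj (sk j) = j" unfolding pj_def sk_def using k3 by auto
lemma sk_pj: "i < k \<Longrightarrow> sk (pj i) = i" unfolding pj_def sk_def using k3 by auto
lemma pj_lt: "i < k \<Longrightarrow> pj i < k" unfolding pj_def using k3 by auto

definition OE :: "nat \<Rightarrow> 'a mvert set set" where
  "OE r = {e. \<exists>i<k. \<exists>f\<in>rho i r. x i \<notin> f \<and> y i \<notin> f \<and> e = Old i ` f}"

definition GE :: "nat \<Rightarrow> 'a mvert set set" where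
  "GE r = {e. \<exists>j<k. (Yv j r = 0 \<and> e = {Av j, Old j (y0 j)}) \<or> (Xv j r = 0 \<and> e = {Av j, Old (sk j) (x0 (sk j))})
     \<or> (Yv j r \<noteq> 0 \<and> Xv j r \<noteq> 0 \<and> e = {Av j, Cv j})
     \<or> (Yv j r = 1 \<and> e = {Bv j, Old j (y1 j)}) \<or> (Xv j r = 1 \<and> e = {Bv j, Old (sk j) (x1 (sk j))})
     \<or> (Yv j r \<noteq> 1 \<and> Xv j r \<noteq> 1 \<and> e = {Bv j, Cv j})}"

definition NN :: "nat \<Rightarrow> 'a mvert set set" where
  "NN r = OE r \<union> GE r \<union> TEc (r div 2)"

lemma Yv_rho: "i < k \<Longrightarrow> r < 6 \<Longrightarrow> yv i (rho i r) = Yv i r"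
  using rho_typ unfolding Yv_def by blast
lemma Xv_rho: "j < k \<Longrightarrow> r < 6 \<Longrightarrow> xv (sk j) (rho (sk j) r) = Xv j r"
  using rho_typ sk_lt unfolding Xv_def by blast

lemma Y_char: assumes "i < k" "r < 6"
  shows "(Yv i r = 0 \<longleftrightarrow> {y i, y0 i} \<in> rho i r) \<and> (Yv i r = 1 \<longleftrightarrow> {y i, y1 i} \<in> rho i r)
    \<and> (Yv i r = 2 \<longleftrightarrow> {x i, y i} \<in> rho i r) \<and> Yv i r \<le> 2"
  using yv_char[OF assms(1) rho_pm[OF assms]] Yv_rho[OF assms] by simp

lemma X_char: assumes "j < k" "r < 6"
  shows "(Xv j r = 0 \<longleftrightarrow> {x (sk j), x0 (sk j)} \<in> rho (sk j) r) \<and> (Xv j r = 1 \<longleftrightarrow> {x (sk j), x1 (sk j)} \<in> rho (sk j) r)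
    \<and> (Xv j r = 2 \<longleftrightarrow> {x (sk j), y (sk j)} \<in> rho (sk j) r) \<and> Xv j r \<le> 2"
  using xv_char[OF sk_lt[OF assms(1)] rho_pm[OF sk_lt[OF assms(1)] assms(2)]] Xv_rho[OF assms] by simp

lemma OE_verts: "e \<in> OE r \<Longrightarrow> v \<in> e \<Longrightarrow> \<exists>i u. v = Old i u"
  unfolding OE_def by auto

lemma GE_verts: "e \<in> GE r \<Longrightarrow> \<exists>j. Av j \<in> e \<or> Bv j \<in> e"
  unfolding GE_def by auto

lemma GE_Av: "e \<in> GE r \<Longrightarrow> Av j \<in> e \<Longrightarrow> (Yv j r = 0 \<and> e = {Av j, Old j (y0 j)}) \<or> (Xv j r = 0 \<and> e = {Av j, Old (sk j) (x0 (sk j))})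
     \<or> (Yv j r \<noteq> 0 \<and> Xv j r \<noteq> 0 \<and> e = {Av j, Cv j})"
  unfolding GE_def by auto

lemma GE_Bv: "e \<in> GE r \<Longrightarrow> Bv j \<in> e \<Longrightarrow> (Yv j r = 1 \<and> e = {Bv j, Old j (y1 j)}) \<or> (Xv j r = 1 \<and> e = {Bv j, Old (sk j) (x1 (sk j))})
     \<or> (Yv j r \<noteq> 1 \<and> Xv j r \<noteq> 1 \<and> e = {Bv j, Cv j})"
  unfolding GE_def by auto

lemma Av_unique:
  assumes j: "j < k" and r: "r < 6"
  shows "\<exists>!e. e \<in> NN r \<and> Av j \<in> e"
proof -
  have ne: "Yv j r \<noteq> Xv j r" using R4[OF j r] .
  have sne: "sk j \<noteq> j" using sk_ne[OF j] .
  define e0 where "e0 = (if Yv j r = 0 then {Av j, Old j (y0 j)} else if Xv j r = 0 then {Av j, Old (sk j) (x0 (sk j))} else {Av j, Cv j})"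
  have in0: "e0 \<in> GE r" unfolding GE_def e0_def using j by auto
  have "\<And>e. e \<in> NN r \<Longrightarrow> Av j \<in> e \<Longrightarrow> e = e0"
  proof -
    fix e assume e: "e \<in> NN r" "Av j \<in> e"
    have "e \<notin> OE r" using OE_verts e(2) by blast
    moreover have "e \<notin> TEc (r div 2)" using TEc_verts[of "r div 2" e "Av j"] e(2) r by fastforce
    ultimately have "e \<in> GE r" using e(1) unfolding NN_def by blast
    then have d: "(Yv j r = 0 \<and> e = {Av j, Old j (y0 j)}) \<or> (Xv j r = 0 \<and> e = {Av j, Old (sk j) (x0 (sk j))})
     \<or> (Yv j r \<noteq> 0 \<and> Xv j r \<noteq> 0 \<and> e = {Av j, Cv j})" using e(2) by (rule GE_Av)
    show "e = e0" using d ne unfolding e0_def by auto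
  qed
  moreover have "e0 \<in> NN r \<and> Av j \<in> e0" using in0 unfolding NN_def e0_def by auto
  ultimately show ?thesis by blast
qed

lemma Bv_unique:
  assumes j: "j < k" and r: "r < 6"
  shows "\<exists>!e. e \<in> NN r \<and> Bv j \<in> e"
proof -
  have ne: "Yv j r \<noteq> Xv j r" using R4[OF j r] .
  have sne: "sk j \<noteq> j" using sk_ne[OF j] .
  define e0 where "e0 = (if Yv j r = 1 then {Bv j, Old j (y1 j)} else if Xv j r = 1 then {Bv j, Old (sk j) (x1 (sk j))} else {Bv j, Cv j})"
  have in0: "e0 \<in> GE r" unfolding GE_def e0_def using j by auto
  have "\<And>e. e \<in> NN r \<Longrightarrow> Bv j \<in> e \<Longrightarrow> e = e0"
  proof -
    fix e assume e: "e \<in> NN r" "Bv j \<in> e"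
    have "e \<notin> OE r" using OE_verts e(2) by blast
    moreover have "e \<notin> TEc (r div 2)" using TEc_verts[of "r div 2" e "Bv j"] e(2) r by fastforce
    ultimately have "e \<in> GE r" using e(1) unfolding NN_def by blast
    then have d: "(Yv j r = 1 \<and> e = {Bv j, Old j (y1 j)}) \<or> (Xv j r = 1 \<and> e = {Bv j, Old (sk j) (x1 (sk j))})
     \<or> (Yv j r \<noteq> 1 \<and> Xv j r \<noteq> 1 \<and> e = {Bv j, Cv j})" using e(2) by (rule GE_Bv)
    show "e = e0" using d ne unfolding e0_def by auto
  qed
  moreover have "e0 \<in> NN r \<and> Bv j \<in> e0" using in0 unfolding NN_def e0_def by auto
  ultimately show ?thesis by blast
qed

lemma Pv_unique:
  assumes m: "m < k - 2" and r: "r < 6"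
  shows "\<exists>!e. e \<in> NN r \<and> Pv m \<in> e"
proof -
  have c: "r div 2 < 3" using r by auto
  have "\<And>e. e \<in> NN r \<Longrightarrow> Pv m \<in> e \<Longrightarrow> e \<in> TEc (r div 2)"
  proof -
    fix e assume e: "e \<in> NN r" "Pv m \<in> e"
    have "e \<notin> OE r" using OE_verts e(2) by blast
    moreover have "e \<notin> GE r" using e(2) unfolding GE_def by auto
    ultimately show "e \<in> TEc (r div 2)" using e(1) unfolding NN_def by blast
  qed
  then show ?thesis using T2[OF c m] unfolding NN_def by blast
qed

lemma Cv_unique:
  assumes j: "j < k" and r: "r < 6"
  shows "\<exists>!e. e \<in> NN r \<and> Cv j \<in> e"
proof -
  have ne: "Yv j r \<noteq> Xv j r" using R4[OF j r] .
  have le: "Yv j r \<le> 2" "Xv j r \<le> 2" using Y_char[OF j r] X_char[OF j r] by auto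
  have c: "r div 2 < 3" using r by auto
  have tjr: "tjc (2 * (r div 2)) j = tjc r j" unfolding tjc_def by simp
  have tt: "(\<exists>e\<in>(TEc (r div 2) :: 'a mvert set set). Cv j \<in> e) \<longleftrightarrow> Yv j r \<noteq> 2 \<and> Xv j r \<noteq> 2"
    using T3[OF c j] tj_char[OF j r] tjr unfolding tj_def by simp
  have ge: "\<And>e. e \<in> GE r \<Longrightarrow> Cv j \<in> e \<Longrightarrow> (Yv j r \<noteq> 0 \<and> Xv j r \<noteq> 0 \<and> e = {Av j, Cv j}) \<or> (Yv j r \<noteq> 1 \<and> Xv j r \<noteq> 1 \<and> e = {Bv j, Cv j})"
    unfolding GE_def by auto
  have ge2: "Yv j r \<noteq> 0 \<and> Xv j r \<noteq> 0 \<Longrightarrow> {Av j, Cv j} \<in> GE r" "Yv j r \<noteq> 1 \<and> Xv j r \<noteq> 1 \<Longrightarrow> {Bv j, Cv j} \<in> GE r"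
    unfolding GE_def using j by blast+
  have nt: "\<And>e. e \<in> TEc (r div 2) \<Longrightarrow> Av j \<notin> e \<and> Bv j \<notin> e" using TEc_verts[OF c] by blast
  have noe: "\<And>e. e \<in> OE r \<Longrightarrow> Cv j \<notin> e" using OE_verts by blast
  consider "Yv j r \<noteq> 2 \<and> Xv j r \<noteq> 2" | "Yv j r = 2 \<and> (Xv j r = 0 \<or> Xv j r = 1)" | "Xv j r = 2 \<and> (Yv j r = 0 \<or> Yv j r = 1)"
    using ne le by linarith
  then show ?thesis
  proof cases
    case 1
    then obtain e0 :: "'a mvert set" where e0: "e0 \<in> TEc (r div 2)" "Cv j \<in> e0" using tt by blast
    have v: "Yv j r = 0 \<and> Xv j r = 1 \<or> Yv j r = 1 \<and> Xv j r = 0" using 1 ne le by linarith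
    have ex: "e0 \<in> NN r \<and> Cv j \<in> e0" using e0 unfolding NN_def by blast
    have un: "\<forall>e. e \<in> NN r \<and> Cv j \<in> e \<longrightarrow> e = e0"
    proof (intro allI impI)
      fix e assume e: "e \<in> NN r \<and> Cv j \<in> e"
      have "e \<notin> GE r"
      proof
        assume "e \<in> GE r"
        then have "(Yv j r \<noteq> 0 \<and> Xv j r \<noteq> 0 \<and> e = {Av j, Cv j}) \<or> (Yv j r \<noteq> 1 \<and> Xv j r \<noteq> 1 \<and> e = {Bv j, Cv j})"
          using ge e by blast
        then show False using v by auto
      qed
      then have "e \<in> TEc (r div 2)" using e noe unfolding NN_def by blast
      then show "e = e0" using T3u[OF c _ e0(1)] e e0 by blast
    qed
    show ?thesis using ex un by blast
  next
    case 2
    define e0 :: "'a mvert set" where "e0 = (if Xv j r = 0 then {Bv j, Cv j} else {Av j, Cv j})"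
    have ex: "e0 \<in> NN r \<and> Cv j \<in> e0" using ge2 2 unfolding NN_def e0_def by auto
    have un: "\<forall>e. e \<in> NN r \<and> Cv j \<in> e \<longrightarrow> e = e0"
    proof (intro allI impI)
      fix e assume e: "e \<in> NN r \<and> Cv j \<in> e"
      have "e \<notin> TEc (r div 2)" using tt 2 e by blast
      then have "e \<in> GE r" using e noe unfolding NN_def by blast
      then have "(Yv j r \<noteq> 0 \<and> Xv j r \<noteq> 0 \<and> e = {Av j, Cv j}) \<or> (Yv j r \<noteq> 1 \<and> Xv j r \<noteq> 1 \<and> e = {Bv j, Cv j})"
        using ge e by blast
      then show "e = e0" using 2 unfolding e0_def by auto
    qed
    show ?thesis using ex un by blast
  next
    case 3
    define e0 :: "'a mvert set" where "e0 = (if Yv j r = 0 then {Bv j, Cv j} else {Av j, Cv j})"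
    have ex: "e0 \<in> NN r \<and> Cv j \<in> e0" using ge2 3 unfolding NN_def e0_def by auto
    have un: "\<forall>e. e \<in> NN r \<and> Cv j \<in> e \<longrightarrow> e = e0"
    proof (intro allI impI)
      fix e assume e: "e \<in> NN r \<and> Cv j \<in> e"
      have "e \<notin> TEc (r div 2)" using tt 3 e by blast
      then have "e \<in> GE r" using e noe unfolding NN_def by blast
      then have "(Yv j r \<noteq> 0 \<and> Xv j r \<noteq> 0 \<and> e = {Av j, Cv j}) \<or> (Yv j r \<noteq> 1 \<and> Xv j r \<noteq> 1 \<and> e = {Bv j, Cv j})"
        using ge e by blast
      then show "e = e0" using 3 unfolding e0_def by auto
    qed
    show ?thesis using ex un by blast
  qed
qed

end

context MG begin

definition phi :: "nat \<Rightarrow> 'a \<Rightarrow> 'a set \<Rightarrow> 'a mvert set" where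
  "phi i u f = (if x i \<in> f then (if u = x0 i then {Av (pj i), Old i u} else {Bv (pj i), Old i u})
     else if y i \<in> f then (if u = y0 i then {Av i, Old i u} else {Bv i, Old i u}) else Old i ` f)"

lemma phi_in:
  assumes i: "i < k" and r: "r < 6" and u: "u \<in> V i" "u \<noteq> x i" "u \<noteq> y i"
    and f: "f \<in> rho i r" "u \<in> f"
  shows "phi i u f \<in> NN r"
proof -
  have pm: "perfect_matching (V i) (E i) (rho i r)" using rho_pm[OF i r] .
  have fE: "f \<in> E i" using pm f unfolding perfect_matching_def by blast
  have vv: "x0 i \<noteq> y i" "x1 i \<noteq> y i" "x0 i \<noteq> x1 i" "y0 i \<noteq> y1 i" "y0 i \<noteq> x i" "y1 i \<noteq> x i"
    using ingE[OF i] by auto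
  have pjl: "pj i < k" "sk (pj i) = i" using pj_lt[OF i] sk_pj[OF i] by auto
  have Xc: "Xv (pj i) r = 0 \<longleftrightarrow> {x i, x0 i} \<in> rho i r" "Xv (pj i) r = 1 \<longleftrightarrow> {x i, x1 i} \<in> rho i r"
    using X_char[OF pjl(1) r] pjl(2) by auto
  have Yc: "Yv i r = 0 \<longleftrightarrow> {y i, y0 i} \<in> rho i r" "Yv i r = 1 \<longleftrightarrow> {y i, y1 i} \<in> rho i r"
    using Y_char[OF i r] by auto
  show ?thesis
  proof (cases "x i \<in> f")
    case True
    then have "f = {x i, y i} \<or> f = {x i, x0 i} \<or> f = {x i, x1 i}" using x_edge_cases[OF i fE] by blast
    then have "f = {x i, x0 i} \<and> u = x0 i \<or> f = {x i, x1 i} \<and> u = x1 i" using f(2) u by auto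
    then show ?thesis
    proof
      assume a: "f = {x i, x0 i} \<and> u = x0 i"
      then have "Xv (pj i) r = 0" using Xc f(1) by simp
      then have "{Av (pj i), Old (sk (pj i)) (x0 (sk (pj i)))} \<in> GE r" unfolding GE_def using pjl(1) by blast
      then show ?thesis unfolding phi_def NN_def using a True pjl(2) by auto
    next
      assume a: "f = {x i, x1 i} \<and> u = x1 i"
      then have "Xv (pj i) r = 1" using Xc f(1) by simp
      then have "{Bv (pj i), Old (sk (pj i)) (x1 (sk (pj i)))} \<in> GE r" unfolding GE_def using pjl(1) by blast
      then show ?thesis unfolding phi_def NN_def using a True pjl(2) vv by auto
    qed
  next
    case nx: False
    show ?thesis
    proof (cases "y i \<in> f")
      case True
      then have "f = {x i, y i} \<or> f = {y i, y0 i} \<or> f = {y i, y1 i}" using y_edge_cases[OF i fE] by blast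
      then have "f = {y i, y0 i} \<and> u = y0 i \<or> f = {y i, y1 i} \<and> u = y1 i" using f(2) u nx by auto
      then show ?thesis
      proof
        assume a: "f = {y i, y0 i} \<and> u = y0 i"
        then have "Yv i r = 0" using Yc f(1) by simp
        then have "{Av i, Old i (y0 i)} \<in> GE r" unfolding GE_def using i by blast
        then show ?thesis unfolding phi_def NN_def using a True nx by auto
      next
        assume a: "f = {y i, y1 i} \<and> u = y1 i"
        then have "Yv i r = 1" using Yc f(1) by simp
        then have "{Bv i, Old i (y1 i)} \<in> GE r" unfolding GE_def using i by blast
        then show ?thesis unfolding phi_def NN_def using a True nx vv by auto
      qed
    next
      case False
      then have "Old i ` f \<in> OE r" unfolding OE_def using i f nx by blast
      then show ?thesis unfolding phi_def NN_def using nx False by auto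
    qed
  qed
qed

lemma phi_all:
  assumes i: "i < k" and r: "r < 6" and u: "u \<in> V i" "u \<noteq> x i" "u \<noteq> y i"
    and e: "e \<in> NN r" "Old i u \<in> e"
  shows "\<exists>f\<in>rho i r. u \<in> f \<and> e = phi i u f"
proof -
  have vv: "x0 i \<noteq> y i" "x1 i \<noteq> y i" "x0 i \<noteq> x1 i" "y0 i \<noteq> y1 i" "y0 i \<noteq> x i" "y1 i \<noteq> x i" "x i \<noteq> y i"
    using ingE[OF i] verts[OF i] by auto
  have c: "r div 2 < 3" using r by auto
  have "e \<notin> TEc (r div 2)" using TEc_verts[OF c _ e(2)] by auto
  then have "e \<in> OE r \<or> e \<in> GE r" using e(1) unfolding NN_def by blast
  then show ?thesis
  proof
    assume "e \<in> OE r"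
    then obtain i' f where f: "i' < k" "f \<in> rho i' r" "x i' \<notin> f" "y i' \<notin> f" "e = Old i' ` f"
      unfolding OE_def by blast
    then have ii: "i' = i" "u \<in> f" using e(2) by auto
    have "phi i u f = Old i ` f" unfolding phi_def using f ii by simp
    then show ?thesis using f ii by blast
  next
    assume "e \<in> GE r"
    then obtain j where j: "j < k" and d: "(Yv j r = 0 \<and> e = {Av j, Old j (y0 j)}) \<or> (Xv j r = 0 \<and> e = {Av j, Old (sk j) (x0 (sk j))})
     \<or> (Yv j r \<noteq> 0 \<and> Xv j r \<noteq> 0 \<and> e = {Av j, Cv j})
     \<or> (Yv j r = 1 \<and> e = {Bv j, Old j (y1 j)}) \<or> (Xv j r = 1 \<and> e = {Bv j, Old (sk j) (x1 (sk j))})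
     \<or> (Yv j r \<noteq> 1 \<and> Xv j r \<noteq> 1 \<and> e = {Bv j, Cv j})"
      unfolding GE_def by blast
    have Xc: "Xv j r = 0 \<longleftrightarrow> {x (sk j), x0 (sk j)} \<in> rho (sk j) r" "Xv j r = 1 \<longleftrightarrow> {x (sk j), x1 (sk j)} \<in> rho (sk j) r"
      using X_char[OF j r] by auto
    have Yc: "Yv j r = 0 \<longleftrightarrow> {y j, y0 j} \<in> rho j r" "Yv j r = 1 \<longleftrightarrow> {y j, y1 j} \<in> rho j r"
      using Y_char[OF j r] by auto
    from d show ?thesis
    proof (elim disjE)
      assume a: "Yv j r = 0 \<and> e = {Av j, Old j (y0 j)}"
      then have ji: "j = i" "u = y0 i" using e(2) by auto
      then have m: "{y i, y0 i} \<in> rho i r" using Yc a by simp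
      have "phi i u {y i, y0 i} = e" unfolding phi_def using vv ji a by simp
      then show ?thesis using m ji by blast
    next
      assume a: "Xv j r = 0 \<and> e = {Av j, Old (sk j) (x0 (sk j))}"
      then have ji: "sk j = i" "u = x0 i" using e(2) by auto
      then have "{x i, x0 i} \<in> rho i r" using Xc a by simp
      moreover have "pj i = j" using ji pj_sk[OF j] by simp
      moreover have "phi i u {x i, x0 i} = e" unfolding phi_def using vv ji a calculation by simp
      ultimately show ?thesis using ji by blast
    next
      assume a: "Yv j r \<noteq> 0 \<and> Xv j r \<noteq> 0 \<and> e = {Av j, Cv j}"
      then show ?thesis using e(2) by auto
    next
      assume a: "Yv j r = 1 \<and> e = {Bv j, Old j (y1 j)}"
      then have ji: "j = i" "u = y1 i" using e(2) by auto
      then have m: "{y i, y1 i} \<in> rho i r" using Yc a by simp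
      have "phi i u {y i, y1 i} = e" unfolding phi_def using vv ji a by simp
      then show ?thesis using m ji by blast
    next
      assume a: "Xv j r = 1 \<and> e = {Bv j, Old (sk j) (x1 (sk j))}"
      then have ji: "sk j = i" "u = x1 i" using e(2) by auto
      then have "{x i, x1 i} \<in> rho i r" using Xc a by simp
      moreover have "pj i = j" using ji pj_sk[OF j] by simp
      moreover have "phi i u {x i, x1 i} = e" unfolding phi_def using vv ji a calculation by simp
      ultimately show ?thesis using ji by blast
    next
      assume a: "Yv j r \<noteq> 1 \<and> Xv j r \<noteq> 1 \<and> e = {Bv j, Cv j}"
      then show ?thesis using e(2) by auto
    qed
  qed
qed

lemma Old_unique:
  assumes i: "i < k" and r: "r < 6" and u: "u \<in> V i" "u \<noteq> x i" "u \<noteq> y i"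
  shows "\<exists>!e. e \<in> NN r \<and> Old i u \<in> e"
proof -
  have pm: "perfect_matching (V i) (E i) (rho i r)" using rho_pm[OF i r] .
  obtain f where f: "f \<in> rho i r" "u \<in> f" using pm_ex[OF pm u(1)] by blast
  have ex: "phi i u f \<in> NN r \<and> Old i u \<in> phi i u f"
    using phi_in[OF i r u f] f(2) unfolding phi_def by auto
  have un: "\<forall>e. e \<in> NN r \<and> Old i u \<in> e \<longrightarrow> e = phi i u f"
  proof (intro allI impI)
    fix e assume "e \<in> NN r \<and> Old i u \<in> e"
    then obtain f' where f': "f' \<in> rho i r" "u \<in> f'" "e = phi i u f'" using phi_all[OF i r u] by blast
    then have "f' = f" using pm_unique[OF pm u(1) f'(1) f(1) f'(2) f(2)] by simp
    then show "e = phi i u f" using f' by simp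
  qed
  show ?thesis using ex un by blast
qed

end

lemma card_rest:
  assumes a: "card {r::nat. r < 6 \<and> P r} = 2" and b: "card {r. r < 6 \<and> Q r} = 2"
    and d: "\<And>r. r < 6 \<Longrightarrow> P r \<Longrightarrow> \<not> Q r"
  shows "card {r. r < 6 \<and> \<not> P r \<and> \<not> Q r} = 2"
proof -
  let ?A = "{r. r < 6 \<and> P r}" and ?B = "{r. r < 6 \<and> Q r}" and ?C = "{r. r < 6 \<and> \<not> P r \<and> \<not> Q r}"
  have u: "{..<6::nat} = (?A \<union> ?B) \<union> ?C" by auto
  have f: "finite ?A" "finite ?B" "finite ?C" by auto
  have "card (?A \<union> ?B) = 4" using a b d f by (subst card_Un_disjoint) auto
  moreover have "card {..<6::nat} = card (?A \<union> ?B) + card ?C"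
    unfolding u using f by (subst card_Un_disjoint) auto
  ultimately show ?thesis by simp
qed

context MG begin

lemma Old_mem:
  assumes i: "i < k" and r: "r < 6" and f: "f \<in> E i" "x i \<notin> f" "y i \<notin> f"
  shows "Old i ` f \<in> NN r \<longleftrightarrow> f \<in> rho i r"
proof
  assume "f \<in> rho i r"
  then show "Old i ` f \<in> NN r" unfolding NN_def OE_def using i f by blast
next
  assume m: "Old i ` f \<in> NN r"
  obtain u where u: "u \<in> f" using edge_form[OF i f(1)] by blast
  have c: "r div 2 < 3" using r by auto
  have "Old i ` f \<notin> TEc (r div 2)" using TEc_verts[OF c, of "Old i ` f" "Old i u"] u by auto
  moreover have "Old i ` f \<notin> GE r" using GE_verts[of "Old i ` f" r] by auto
  ultimately have "Old i ` f \<in> OE r" using m unfolding NN_def by blast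
  then obtain i' f' where f': "i' < k" "f' \<in> rho i' r" "Old i ` f = Old i' ` f'" unfolding OE_def by blast
  have "Old i u \<in> Old i' ` f'" using f'(3) u by blast
  then have "i' = i" by auto
  moreover have "inj (Old i)" by (auto simp: inj_def)
  ultimately have "f = f'" using f'(3) inj_image_eq_iff[of "Old i" f f'] by simp
  then show "f \<in> rho i r" using f' \<open>i' = i\<close> by simp
qed

lemma nonOE_nonT:
  assumes r: "r < 6" and v: "Av j \<in> e \<or> Bv j \<in> e"
  shows "e \<in> NN r \<longleftrightarrow> e \<in> GE r"
proof -
  have c: "r div 2 < 3" using r by auto
  have "e \<notin> TEc (r div 2)" using TEc_verts[OF c, of e] v by fastforce
  moreover have "e \<notin> OE r" using OE_verts[of e r] v by fastforce
  ultimately show ?thesis unfolding NN_def by blast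
qed

lemma GE_edges:
  assumes j: "j < k" and r: "r < 6"
  shows "{Av j, Old j (y0 j)} \<in> NN r \<longleftrightarrow> Yv j r = 0"
    "{Av j, Old (sk j) (x0 (sk j))} \<in> NN r \<longleftrightarrow> Xv j r = 0"
    "{Av j, Cv j} \<in> NN r \<longleftrightarrow> Yv j r \<noteq> 0 \<and> Xv j r \<noteq> 0"
    "{Bv j, Old j (y1 j)} \<in> NN r \<longleftrightarrow> Yv j r = 1"
    "{Bv j, Old (sk j) (x1 (sk j))} \<in> NN r \<longleftrightarrow> Xv j r = 1"
    "{Bv j, Cv j} \<in> NN r \<longleftrightarrow> Yv j r \<noteq> 1 \<and> Xv j r \<noteq> 1"
proof -
  have sne: "sk j \<noteq> j" using sk_ne[OF j] .
  have gi: "\<And>e. (Yv j r = 0 \<and> e = {Av j, Old j (y0 j)}) \<or> (Xv j r = 0 \<and> e = {Av j, Old (sk j) (x0 (sk j))})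
     \<or> (Yv j r \<noteq> 0 \<and> Xv j r \<noteq> 0 \<and> e = {Av j, Cv j})
     \<or> (Yv j r = 1 \<and> e = {Bv j, Old j (y1 j)}) \<or> (Xv j r = 1 \<and> e = {Bv j, Old (sk j) (x1 (sk j))})
     \<or> (Yv j r \<noteq> 1 \<and> Xv j r \<noteq> 1 \<and> e = {Bv j, Cv j}) \<Longrightarrow> e \<in> GE r"
    unfolding GE_def using j by blast
  have "{Av j, Old j (y0 j)} \<in> NN r \<longleftrightarrow> {Av j, Old j (y0 j)} \<in> GE r" by (rule nonOE_nonT[OF r, of j]) simp
  then show "{Av j, Old j (y0 j)} \<in> NN r \<longleftrightarrow> Yv j r = 0"
    using GE_Av[of "{Av j, Old j (y0 j)}" r j] gi[of "{Av j, Old j (y0 j)}"] sne by auto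
  have "{Av j, Old (sk j) (x0 (sk j))} \<in> NN r \<longleftrightarrow> {Av j, Old (sk j) (x0 (sk j))} \<in> GE r" by (rule nonOE_nonT[OF r, of j]) simp
  then show "{Av j, Old (sk j) (x0 (sk j))} \<in> NN r \<longleftrightarrow> Xv j r = 0"
    using GE_Av[of "{Av j, Old (sk j) (x0 (sk j))}" r j] gi[of "{Av j, Old (sk j) (x0 (sk j))}"] sne by auto
  have "{Av j, Cv j} \<in> NN r \<longleftrightarrow> {Av j, Cv j} \<in> GE r" by (rule nonOE_nonT[OF r, of j]) simp
  then show "{Av j, Cv j} \<in> NN r \<longleftrightarrow> Yv j r \<noteq> 0 \<and> Xv j r \<noteq> 0"
    using GE_Av[of "{Av j, Cv j}" r j] gi[of "{Av j, Cv j}"]  by auto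
  have "{Bv j, Old j (y1 j)} \<in> NN r \<longleftrightarrow> {Bv j, Old j (y1 j)} \<in> GE r" by (rule nonOE_nonT[OF r, of j]) simp
  then show "{Bv j, Old j (y1 j)} \<in> NN r \<longleftrightarrow> Yv j r = 1"
    using GE_Bv[of "{Bv j, Old j (y1 j)}" r j] gi[of "{Bv j, Old j (y1 j)}"] sne by auto
  have "{Bv j, Old (sk j) (x1 (sk j))} \<in> NN r \<longleftrightarrow> {Bv j, Old (sk j) (x1 (sk j))} \<in> GE r" by (rule nonOE_nonT[OF r, of j]) simp
  then show "{Bv j, Old (sk j) (x1 (sk j))} \<in> NN r \<longleftrightarrow> Xv j r = 1"
    using GE_Bv[of "{Bv j, Old (sk j) (x1 (sk j))}" r j] gi[of "{Bv j, Old (sk j) (x1 (sk j))}"] sne by auto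
  have "{Bv j, Cv j} \<in> NN r \<longleftrightarrow> {Bv j, Cv j} \<in> GE r" by (rule nonOE_nonT[OF r, of j]) simp
  then show "{Bv j, Cv j} \<in> NN r \<longleftrightarrow> Yv j r \<noteq> 1 \<and> Xv j r \<noteq> 1"
    using GE_Bv[of "{Bv j, Cv j}" r j] gi[of "{Bv j, Cv j}"]  by auto
qed

lemma cardY: "j < k \<Longrightarrow> card {r. r < 6 \<and> Yv j r = 0} = 2" "j < k \<Longrightarrow> card {r. r < 6 \<and> Yv j r = 1} = 2"
proof -
  assume j: "j < k"
  have "{r. r < 6 \<and> Yv j r = 0} = {r. r < 6 \<and> {y j, y0 j} \<in> rho j r}" using Y_char[OF j] by blast
  then show "card {r. r < 6 \<and> Yv j r = 0} = 2" using rho_count[OF j ingE(10)[OF j]] by simp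
  have "{r. r < 6 \<and> Yv j r = 1} = {r. r < 6 \<and> {y j, y1 j} \<in> rho j r}" using Y_char[OF j] by blast
  then show "card {r. r < 6 \<and> Yv j r = 1} = 2" using rho_count[OF j ingE(11)[OF j]] by simp
qed

lemma cardX: "j < k \<Longrightarrow> card {r. r < 6 \<and> Xv j r = 0} = 2" "j < k \<Longrightarrow> card {r. r < 6 \<and> Xv j r = 1} = 2"
proof -
  assume j: "j < k"
  have s: "sk j < k" using sk_lt[OF j] .
  have "{r. r < 6 \<and> Xv j r = 0} = {r. r < 6 \<and> {x (sk j), x0 (sk j)} \<in> rho (sk j) r}" using X_char[OF j] by blast
  then show "card {r. r < 6 \<and> Xv j r = 0} = 2" using rho_count[OF s ingE(5)[OF s]] by simp
  have "{r. r < 6 \<and> Xv j r = 1} = {r. r < 6 \<and> {x (sk j), x1 (sk j)} \<in> rho (sk j) r}" using X_char[OF j] by blast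
  then show "card {r. r < 6 \<and> Xv j r = 1} = 2" using rho_count[OF s ingE(6)[OF s]] by simp
qed

lemma tree_mem:
  assumes r: "r < 6" and e: "e \<in> PE \<union> PD"
  shows "e \<in> NN r \<longleftrightarrow> e \<in> TEc (r div 2)"
proof -
  have "e \<notin> OE r"
  proof
    assume "e \<in> OE r"
    then obtain i f where f: "i < k" "f \<in> rho i r" "e = Old i ` f" unfolding OE_def by blast
    have "f \<in> E i" using rho_pm[OF f(1) r] f(2) unfolding perfect_matching_def by blast
    then obtain u where "u \<in> f" using edge_form[OF f(1)] by blast
    then have "Old i u \<in> e" using f(3) by blast
    then show False using PEPD_verts[OF e] by blast
  qed
  moreover have "e \<notin> GE r"
  proof
    assume "e \<in> GE r"
    then obtain j where "Av j \<in> e \<or> Bv j \<in> e" using GE_verts by blast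
    then show False using PEPD_verts[OF e] by blast
  qed
  ultimately show ?thesis unfolding NN_def by blast
qed

end

context MG begin

lemma NN_sub: assumes r: "r < 6" shows "NN r \<subseteq> M_edges k E x y x0 x1 y0 y1"
proof
  fix e assume e: "e \<in> NN r"
  have c: "r div 2 < 3" using r by auto
  have "e \<in> OE r \<or> e \<in> GE r \<or> e \<in> TEc (r div 2)" using e unfolding NN_def by blast
  then show "e \<in> M_edges k E x y x0 x1 y0 y1"
  proof (elim disjE)
    assume "e \<in> OE r"
    then obtain i f where f: "i < k" "f \<in> rho i r" "x i \<notin> f" "y i \<notin> f" "e = Old i ` f" unfolding OE_def by blast
    have "f \<in> E i" using rho_pm[OF f(1) r] f(2) unfolding perfect_matching_def by blast
    then show ?thesis unfolding M_edges_def using f by blast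
  next
    assume "e \<in> GE r"
    then obtain j where j: "j < k" and d: "(Yv j r = 0 \<and> e = {Av j, Old j (y0 j)}) \<or> (Xv j r = 0 \<and> e = {Av j, Old (sk j) (x0 (sk j))})
     \<or> (Yv j r \<noteq> 0 \<and> Xv j r \<noteq> 0 \<and> e = {Av j, Cv j})
     \<or> (Yv j r = 1 \<and> e = {Bv j, Old j (y1 j)}) \<or> (Xv j r = 1 \<and> e = {Bv j, Old (sk j) (x1 (sk j))})
     \<or> (Yv j r \<noteq> 1 \<and> Xv j r \<noteq> 1 \<and> e = {Bv j, Cv j})"
      unfolding GE_def by blast
    have "e \<in> {{Av j, Old j (y0 j)}, {Av j, Old ((j + 1) mod k) (x0 ((j + 1) mod k))},
               {Bv j, Old j (y1 j)}, {Bv j, Old ((j + 1) mod k) (x1 ((j + 1) mod k))},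
               {Av j, Cv j}, {Bv j, Cv j}}" using d unfolding sk_mod[OF j] by blast
    then show ?thesis unfolding M_edges_def using j by blast
  next
    assume "e \<in> TEc (r div 2)"
    then have "e \<in> PE \<union> PD" using TEc_sub[OF c] by blast
    then show ?thesis unfolding M_edges_def PE_def PD_def by blast
  qed
qed

lemma NN_pm: assumes r: "r < 6"
  shows "perfect_matching (M_vertices k V x y) (M_edges k E x y x0 x1 y0 y1) (NN r)"
  unfolding perfect_matching_def
proof (intro conjI ballI)
  show "NN r \<subseteq> M_edges k E x y x0 x1 y0 y1" using NN_sub[OF r] .
next
  fix v assume "v \<in> M_vertices k V x y"
  then have "(\<exists>i<k. \<exists>u\<in>V i - {x i, y i}. v = Old i u) \<or> (\<exists>j<k. v = Av j) \<or> (\<exists>j<k. v = Bv j)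
     \<or> (\<exists>j<k. v = Cv j) \<or> (\<exists>m<k - 2. v = Pv m)" unfolding M_vertices_def by blast
  then show "\<exists>!e. e \<in> NN r \<and> v \<in> e"
  proof (elim disjE exE conjE bexE)
    fix i u assume "i < k" "u \<in> V i - {x i, y i}" "v = Old i u"
    then show ?thesis using Old_unique[OF _ r] by blast
  next
    fix j assume "j < k" "v = Av j" then show ?thesis using Av_unique[OF _ r] by blast
  next
    fix j assume "j < k" "v = Bv j" then show ?thesis using Bv_unique[OF _ r] by blast
  next
    fix j assume "j < k" "v = Cv j" then show ?thesis using Cv_unique[OF _ r] by blast
  next
    fix m assume "m < k - 2" "v = Pv m" then show ?thesis using Pv_unique[OF _ r] by blast
  qed
qed

lemma NN_count:
  assumes e: "e \<in> M_edges k E x y x0 x1 y0 y1"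
  shows "card {r. r < 6 \<and> e \<in> NN r} = 2"
proof -
  have "(\<exists>i<k. \<exists>f\<in>E i. x i \<notin> f \<and> y i \<notin> f \<and> e = Old i ` f)
    \<or> (\<exists>j<k. e = {Av j, Old j (y0 j)} \<or> e = {Av j, Old (sk j) (x0 (sk j))} \<or> e = {Av j, Cv j}
         \<or> e = {Bv j, Old j (y1 j)} \<or> e = {Bv j, Old (sk j) (x1 (sk j))} \<or> e = {Bv j, Cv j})
    \<or> e \<in> PE \<union> PD"
    using e unfolding M_edges_def PE_def PD_def by (auto simp: sk_mod)
  then consider (O) i f where "i < k" "f \<in> E i" "x i \<notin> f" "y i \<notin> f" "e = Old i ` f"
    | (G) j where "j < k" "e = {Av j, Old j (y0 j)} \<or> e = {Av j, Old (sk j) (x0 (sk j))} \<or> e = {Av j, Cv j}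
         \<or> e = {Bv j, Old j (y1 j)} \<or> e = {Bv j, Old (sk j) (x1 (sk j))} \<or> e = {Bv j, Cv j}"
    | (T) "e \<in> PE \<union> PD" by blast
  then show ?thesis
  proof cases
    case (O i f)
    then have i: "i < k" and f: "f \<in> E i" "x i \<notin> f" "y i \<notin> f" and ee: "e = Old i ` f" by auto
    have "{r. r < 6 \<and> e \<in> NN r} = {r. r < 6 \<and> f \<in> rho i r}" using Old_mem[OF i _ f] ee by blast
    then show ?thesis using rho_count[OF i f(1)] by simp
  next
    case (G j)
    then have j: "j < k" by simp
    note g = GE_edges[OF j]
    have d: "\<And>r. r < 6 \<Longrightarrow> Yv j r = 0 \<Longrightarrow> \<not> Xv j r = 0" "\<And>r. r < 6 \<Longrightarrow> Yv j r = 1 \<Longrightarrow> \<not> Xv j r = 1"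
      using R4[OF j] by metis+
    have cr0: "card {r. r < 6 \<and> \<not> Yv j r = 0 \<and> \<not> Xv j r = 0} = 2"
      using card_rest[of "\<lambda>r. Yv j r = 0" "\<lambda>r. Xv j r = 0", OF cardY(1)[OF j] cardX(1)[OF j] d(1)] by simp
    have cr1: "card {r. r < 6 \<and> \<not> Yv j r = 1 \<and> \<not> Xv j r = 1} = 2"
      using card_rest[of "\<lambda>r. Yv j r = 1" "\<lambda>r. Xv j r = 1", OF cardY(2)[OF j] cardX(2)[OF j] d(2)] by simp
    from G(2) show ?thesis
    proof (elim disjE)
      assume "e = {Av j, Old j (y0 j)}"
      then have "{r. r < 6 \<and> e \<in> NN r} = {r. r < 6 \<and> Yv j r = 0}" using g by blast
      then show ?thesis using cardY(1)[OF j] by simp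
    next
      assume "e = {Av j, Old (sk j) (x0 (sk j))}"
      then have "{r. r < 6 \<and> e \<in> NN r} = {r. r < 6 \<and> Xv j r = 0}" using g by blast
      then show ?thesis using cardX(1)[OF j] by simp
    next
      assume "e = {Av j, Cv j}"
      then have "{r. r < 6 \<and> e \<in> NN r} = {r. r < 6 \<and> \<not> Yv j r = 0 \<and> \<not> Xv j r = 0}" using g by blast
      then show ?thesis using cr0 by simp
    next
      assume "e = {Bv j, Old j (y1 j)}"
      then have "{r. r < 6 \<and> e \<in> NN r} = {r. r < 6 \<and> Yv j r = 1}" using g by blast
      then show ?thesis using cardY(2)[OF j] by simp
    next
      assume "e = {Bv j, Old (sk j) (x1 (sk j))}"
      then have "{r. r < 6 \<and> e \<in> NN r} = {r. r < 6 \<and> Xv j r = 1}" using g by blast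
      then show ?thesis using cardX(2)[OF j] by simp
    next
      assume "e = {Bv j, Cv j}"
      then have "{r. r < 6 \<and> e \<in> NN r} = {r. r < 6 \<and> \<not> Yv j r = 1 \<and> \<not> Xv j r = 1}" using g by blast
      then show ?thesis using cr1 by simp
    qed
  next
    case T
    then have e': "e \<in> PE \<union> PD" .
    have "{r. r < 6 \<and> e \<in> NN r} = {r. r < 6 \<and> e \<in> TEc (r div 2)}" using tree_mem[OF _ e'] by blast
    then show ?thesis using T5[OF e'] by simp
  qed
qed

lemma main: "has_fulkerson_cover (M_vertices k V x y) (M_edges k E x y x0 x1 y0 y1)"
  unfolding has_fulkerson_cover_def
proof (intro exI[of _ "map NN [0..<6]"])
  show "fulkerson_cover (M_vertices k V x y) (M_edges k E x y x0 x1 y0 y1) (map NN [0..<6])"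
    unfolding fulkerson_cover_def
  proof (intro conjI ballI)
    show "length (map NN [0..<6]) = 6" by simp
  next
    fix M assume "M \<in> set (map NN [0..<6])"
    then obtain r where "r < 6" "M = NN r" by auto
    then show "perfect_matching (M_vertices k V x y) (M_edges k E x y x0 x1 y0 y1) M" using NN_pm by blast
  next
    fix e assume e: "e \<in> M_edges k E x y x0 x1 y0 y1"
    have "length (filter (\<lambda>M. e \<in> M) (map NN [0..<6])) = card {i. i < 6 \<and> e \<in> NN i}"
      unfolding length_filter_conv_card by (simp cong: conj_cong)
    then show "length (filter (\<lambda>M. e \<in> M) (map NN [0..<6])) = 2" using NN_count[OF e] by simp
  qed
qed

end

theorem theorem1p3:
  fixes k :: nat
    and V :: "nat \<Rightarrow> 'a set" and E :: "nat \<Rightarrow> 'a set set"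
    and x y x0 x1 y0 y1 :: "nat \<Rightarrow> 'a"
  assumes "k \<ge> 3"
    and "\<And>i. i < k \<Longrightarrow> M_ingredient (V i) (E i) (x i) (y i) (x0 i) (x1 i) (y0 i) (y1 i)"
  shows "has_fulkerson_cover (M_vertices k V x y) (M_edges k E x y x0 x1 y0 y1)"
proof -
  interpret MG k V E x y x0 x1 y0 y1
    by unfold_locales (use assms in auto)
  show ?thesis by (rule main)
qed

end
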